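(* Let $\mathcal{O}$ be an order (not necessarily maximal) in a definite quaternion algebra $A$ over $\mathbb{Q}$, and fix a weak fundamental domain $\mathcal{F}$ for the action of $\mathrm{SL}_2(\mathcal{O})$ on $\mathbb{H}^5_\mathbb{R}$. Then for every $\Delta\in\mathbb{Z}\setminus\{0\}$, the number of reduced elements of $\mathcal{Q}(\mathcal{O},\Delta)$ is finite.
   Context: $\mathbb{H}$ is Hamilton's real quaternion algebra with conjugation $\overline{x}$, reduced norm $\mathrm{n}(x)=x\overline{x}$, trace $\mathrm{tr}(x)=x+\overline{x}$, and Euclidean norm $\|z\|=\mathrm{n}(z)^{1/2}$. $A$ is a quaternion algebra over $\mathbb{Q}$ with $A\otimes_\mathbb{Q}\mathbb{R}\cong\mathbb{H}$, viewed inside $\mathbb{H}$; an order is a unitary subring which is a finitely generated $\mathbb{Z}$-module spanning $A$ over $\mathbb{Q}$. $\mathrm{SL}_2(\mathcal{O})$ consists of $2\times2$ matrices over $\mathcal{O}$ of Dieudonné determinant $1$ ($\mathrm{Det}\begin{pmatrix}\alpha&\beta\\ \gamma&\delta\end{pmatrix}^2=\mathrm{n}(\alpha\delta)+\mathrm{n}(\beta\gamma)-\mathrm{tr}(\alpha\overline{\gamma}\delta\overline{\beta})$). $\mathbb{H}^5_\mathbb{R}=\mathbb{H}\times\,]0,+\infty[$ with metric $(ds^2_\mathbb{H}+dr^2)/r^2$ and boundary $\mathbb{H}\cup\{\infty\}$, with isometric action $\begin{pmatrix}\alpha&\beta\\ \gamma&\delta\end{pmatrix}\cdot(z,r)=\Big(\frac{(\alpha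 z+\beta)\overline{(\gamma z+\delta)}+\alpha\overline{\gamma}r^2}{\mathrm{n}(\gamma z+\delta)+r^2\mathrm{n}(\gamma)},\frac{r}{\mathrm{n}(\gamma z+\delta)+r^2\mathrm{n}(\gamma)}\Big)$. A parabolic fixed point of a group $\Gamma$ of isometries is a boundary point fixed by a parabolic element of $\Gamma$. A weak fundamental domain for $\Gamma=\mathrm{SL}_2(\mathcal{O})$ is a subset $\mathcal{F}\subset\mathbb{H}^5_\mathbb{R}$ such that (i) $\bigcup_{g\in\Gamma}g\mathcal{F}=\mathbb{H}^5_\mathbb{R}$; (ii) there is a compact $K\subset\mathbb{H}$ with $\mathcal{F}\subset K\times\,]0,+\infty[$; (iii) there exist $\kappa,\epsilon>0$ and a finite set $Z$ of parabolic fixed points of $\Gamma$ such that $\mathcal{F}=\{(z,r)\in\mathcal{F}:r\ge\epsilon\}\cup\bigcup_{s\in Z}\mathcal{E}_s$ with $\mathcal{E}_s\subset\{(z,r)\in\mathcal{F}:\|z-s\|\le\kappa r^2\}$. A binary Hamiltonian form is $f(u,v)=a\,\mathrm{n}(u)+\mathrm{tr}(\overline{u}\,b\,v)+c\,\mathrm{n}(v)$ with $a,c\in\mathbb{R}$, $b\in\mathbb{H}$; it is integral over $\mathcal{O}$ if $a,c\in\mathbb{Z}$, $b\in\mathcal{O}$; its discriminant is $\Delta(f)=\mathrm{n}(b)-ac$. $\mathcal{Q}(\mathcal{O},\Delta)$ is the set of forms integral over $\mathcal{O}$ with discriminant $\Delta$. $f$ is positive definite iff $a>0$ and $\Delta(f)<0$,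 and indefinite iff $\Delta(f)>0$. A positive definite integral form $f$ is reduced if $\big(-\frac{b}{a},\frac{\sqrt{-\Delta(f)}}{a}\big)\in\mathcal{F}$; a negative definite form $f$ is reduced if $-f$ is; an indefinite integral form is reduced if $\mathcal{C}(f)=\{(z,r)\in\mathbb{H}\times\,]0,+\infty[\,:f(z,1)+ar^2=0\}$ meets $\mathcal{F}$. *)

theory Defs
  imports "HOL-Analysis.Analysis"
begin

datatype quat = Quat (qre: real) (qi: real) (qj: real) (qk: real)

instantiation quat :: "{zero, one, plus, minus, uminus, times, scaleR}"
begin
definition "0 = Quat 0 0 0 0"
definition "1 = Quat 1 0 0 0"
definition "p + q = Quat (qre p + qre q) (qi p + qi q) (qj p + qj q) (qk p + qk q)"
definition "p - q = Quat (qre p - qre q) (qi p - qi q) (qj p - qj q) (qk p - qk q)"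
definition "- q = Quat (- qre q) (- qi q) (- qj q) (- qk q)"
definition "p * q = Quat
   (qre p * qre q - qi p * qi q - qj p * qj q - qk p * qk q)
   (qre p * qi q + qi p * qre q + qj p * qk q - qk p * qj q)
   (qre p * qj q - qi p * qk q + qj p * qre q + qk p * qi q)
   (qre p * qk q + qi p * qj q - qj p * qi q + qk p * qre q)"
definition "scaleR r q = Quat (r * qre q) (r * qi q) (r * qj q) (r * qk q)"
instance ..
end

lemma quat_eqI: "qre p = qre q \<Longrightarrow> qi p = qi q \<Longrightarrow> qj p = qj q \<Longrightarrow> qk p = qk q \<Longrightarrow> p = q"
  by (cases p; cases q) simp

instance quat :: ab_group_add
  by standard (auto intro!: quat_eqI simp: plus_quat_def minus_quat_def uminus_quat_def zero_quat_def)

definition qcnj :: "quat \<Rightarrow> quat" where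
  "qcnj q = Quat (qre q) (- qi q) (- qj q) (- qk q)"

definition qn :: "quat \<Rightarrow> real" where
  "qn q = (qre q)\<^sup>2 + (qi q)\<^sup>2 + (qj q)\<^sup>2 + (qk q)\<^sup>2"

definition qtr :: "quat \<Rightarrow> real" where
  "qtr q = 2 * qre q"

definition qnorm :: "quat \<Rightarrow> real" where
  "qnorm q = sqrt (qn q)"

text \<open>embedding of the reals and multiplicative inverse (inverse of 0 is 0)\<close>
definition qof_real :: "real \<Rightarrow> quat" where
  "qof_real r = Quat r 0 0 0"

definition qinv :: "quat \<Rightarrow> quat" where
  "qinv q = (1 / qn q) *\<^sub>R qcnj q"

text \<open>the (Euclidean) topology of H is that of R^4\<close>
definition quat_vec :: "quat \<Rightarrow> real^4" where
  "quat_vec q = vector [qre q, qi q, qj q, qk q]"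

definition qcompact :: "quat set \<Rightarrow> bool" where
  "qcompact K \<longleftrightarrow> compact (quat_vec ` K)"

text \<open>A: a Q-subalgebra of H (containing 1, closed under + and *) with a Q-basis
  e 0, ..., e 3 which is an R-basis of H (i.e. A tensor R = H).\<close>
definition real_lin_indep4 :: "(nat \<Rightarrow> quat) \<Rightarrow> bool" where
  "real_lin_indep4 e \<longleftrightarrow>
     (\<forall>c :: nat \<Rightarrow> real. (\<Sum>i<4. c i *\<^sub>R e i) = 0 \<longrightarrow> (\<forall>i<4. c i = 0))"

definition definite_quat_algebra_Q :: "quat set \<Rightarrow> bool" where
  "definite_quat_algebra_Q A \<longleftrightarrow>
     1 \<in> A \<and> (\<forall>x\<in>A. \<forall>y\<in>A. x + y \<in> A \<and> x * y \<in> A) \<and>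
     (\<exists>e :: nat \<Rightarrow> quat. (\<forall>i<4. e i \<in> A) \<and> real_lin_indep4 e \<and>
        A = {(\<Sum>i<4. of_rat (c i) *\<^sub>R e i) | c :: nat \<Rightarrow> rat. True})"

definition quat_order :: "quat set \<Rightarrow> quat set \<Rightarrow> bool" where
  "quat_order A \<O> \<longleftrightarrow>
     1 \<in> \<O> \<and> (\<forall>x\<in>\<O>. \<forall>y\<in>\<O>. x + y \<in> \<O> \<and> x - y \<in> \<O> \<and> x * y \<in> \<O>) \<and>
     (\<exists>S. finite S \<and> S \<subseteq> \<O> \<and>
        \<O> = {(\<Sum>s\<in>S. of_int (k s) *\<^sub>R s) | k :: quat \<Rightarrow> int. True} \<and>
        A = {(\<Sum>s\<in>S. of_rat (c s) *\<^sub>R s) | c :: quat \<Rightarrow> rat. True})"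

text \<open>A 2x2 matrix (alpha, beta; gamma, delta) is represented by the tuple (alpha, beta, gamma, delta).\<close>
type_synonym qmat = "quat \<times> quat \<times> quat \<times> quat"

definition dieudonne_det_sq :: "qmat \<Rightarrow> real" where
  "dieudonne_det_sq g = (case g of (\<alpha>, \<beta>, \<gamma>, \<delta>) \<Rightarrow>
     qn (\<alpha> * \<delta>) + qn (\<beta> * \<gamma>) - qtr (\<alpha> * qcnj \<gamma> * \<delta> * qcnj \<beta>))"

text \<open>Dieudonne determinant is nonnegative, so Det = 1 iff Det^2 = 1.\<close>
definition SL2 :: "quat set \<Rightarrow> qmat set" where
  "SL2 \<O> = {(\<alpha>, \<beta>, \<gamma>, \<delta>). \<alpha> \<in> \<O> \<and> \<beta> \<in> \<O> \<and> \<gamma> \<in> \<O> \<and> \<delta> \<in> \<O> \<and>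
                            dieudonne_det_sq (\<alpha>, \<beta>, \<gamma>, \<delta>) = 1}"

text \<open>points (z, r) of H^5 = H x ]0, +oo[\<close>
definition H5 :: "(quat \<times> real) set" where
  "H5 = {p. snd p > 0}"

definition hyp_act :: "qmat \<Rightarrow> quat \<times> real \<Rightarrow> quat \<times> real" where
  "hyp_act g p = (case g of (\<alpha>, \<beta>, \<gamma>, \<delta>) \<Rightarrow> case p of (z, r) \<Rightarrow>
     (let D = qn (\<gamma> * z + \<delta>) + r\<^sup>2 * qn \<gamma> in
      ((1 / D) *\<^sub>R ((\<alpha> * z + \<beta>) * qcnj (\<gamma> * z + \<delta>) + r\<^sup>2 *\<^sub>R (\<alpha> * qcnj \<gamma>)), r / D)))"

text \<open>boundary H \<union> {\<infinity>}: Some z is z \<in> H, None is \<infinity>; induced action by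
  z \<mapsto> (\<alpha> z + \<beta>)(\<gamma> z + \<delta>)\<inverse>.\<close>
definition bdry_act :: "qmat \<Rightarrow> quat option \<Rightarrow> quat option" where
  "bdry_act g x = (case g of (\<alpha>, \<beta>, \<gamma>, \<delta>) \<Rightarrow> case x of
       Some z \<Rightarrow> (if \<gamma> * z + \<delta> = 0 then None else Some ((\<alpha> * z + \<beta>) * qinv (\<gamma> * z + \<delta>)))
     | None \<Rightarrow> (if \<gamma> = 0 then None else Some (\<alpha> * qinv \<gamma>)))"

definition parabolic :: "qmat \<Rightarrow> bool" where
  "parabolic g \<longleftrightarrow> (\<forall>p\<in>H5. hyp_act g p \<noteq> p) \<and> (\<exists>!x. bdry_act g x = x)"

definition parabolic_fixed_point :: "qmat set \<Rightarrow> quat option \<Rightarrow> bool" where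
  "parabolic_fixed_point \<Gamma> x \<longleftrightarrow> (\<exists>g\<in>\<Gamma>. parabolic g \<and> bdry_act g x = x)"

definition weak_fundamental_domain :: "qmat set \<Rightarrow> (quat \<times> real) set \<Rightarrow> bool" where
  "weak_fundamental_domain \<Gamma> F \<longleftrightarrow>
     F \<subseteq> H5 \<and>
     (\<Union>g\<in>\<Gamma>. hyp_act g ` F) = H5 \<and>
     (\<exists>K. qcompact K \<and> F \<subseteq> K \<times> {0<..}) \<and>
     (\<exists>\<kappa> \<epsilon> Z E. \<kappa> > 0 \<and> \<epsilon> > 0 \<and> finite Z \<and>
        (\<forall>s\<in>Z. parabolic_fixed_point \<Gamma> (Some s)) \<and>
        F = {(z, r) \<in> F. r \<ge> \<epsilon>} \<union> (\<Union>s\<in>Z. E s) \<and>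
        (\<forall>s\<in>Z. E s \<subseteq> {(z, r) \<in> F. qnorm (z - s) \<le> \<kappa> * r\<^sup>2}))"

text \<open>f(u,v) = a n(u) + tr(conj(u) b v) + c n(v) is represented by (a, b, c).
  Integral forms over \<O>: a, c integers, b in \<O>.\<close>
definition form_disc :: "real \<times> quat \<times> real \<Rightarrow> real" where
  "form_disc f = (case f of (a, b, c) \<Rightarrow> qn b - a * c)"

definition form_eval :: "real \<times> quat \<times> real \<Rightarrow> quat \<Rightarrow> quat \<Rightarrow> real" where
  "form_eval f u v = (case f of (a, b, c) \<Rightarrow> a * qn u + qtr (qcnj u * b * v) + c * qn v)"

definition Qforms :: "quat set \<Rightarrow> int \<Rightarrow> (int \<times> quat \<times> int) set" where
  "Qforms \<O> \<Delta> = {(a, b, c). b \<in> \<O> \<and> form_disc (real_of_int a, b, real_of_int c) = real_of_int \<Delta>}"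

definition pos_def_reduced :: "(quat \<times> real) set \<Rightarrow> real \<times> quat \<times> real \<Rightarrow> bool" where
  "pos_def_reduced F f = (case f of (a, b, c) \<Rightarrow>
     ((- 1 / a) *\<^sub>R b, sqrt (- form_disc f) / a) \<in> F)"

definition form_C :: "real \<times> quat \<times> real \<Rightarrow> (quat \<times> real) set" where
  "form_C f = (case f of (a, b, c) \<Rightarrow> {(z, r). r > 0 \<and> form_eval f z 1 + a * r\<^sup>2 = 0})"

definition reduced_form :: "(quat \<times> real) set \<Rightarrow> int \<times> quat \<times> int \<Rightarrow> bool" where
  "reduced_form F f = (case f of (a, b, c) \<Rightarrow>
     let f' = (real_of_int a, b, real_of_int c) in
     (a > 0 \<and> form_disc f' < 0 \<and> pos_def_reduced F f') \<or>
     (a < 0 \<and> form_disc f' < 0 \<and> pos_def_reduced F (- real_of_int a, - b, - real_of_int c)) \<or>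
     (form_disc f' > 0 \<and> form_C f' \<inter> F \<noteq> {}))"

end

theory Submission
  imports Defs
begin


lemma quat_eq_iff: "p = q \<longleftrightarrow> qre p = qre q \<and> qi p = qi q \<and> qj p = qj q \<and> qk p = qk q"
  by (auto intro: quat_eqI)

lemma quat_sel_simps [simp]:
  "qre 0 = 0" "qi 0 = 0" "qj 0 = 0" "qk 0 = 0"
  "qre 1 = 1" "qi 1 = 0" "qj 1 = 0" "qk 1 = 0"
  "qre (p + q) = qre p + qre q" "qi (p + q) = qi p + qi q" "qj (p + q) = qj p + qj q" "qk (p + q) = qk p + qk q"
  "qre (p - q) = qre p - qre q" "qi (p - q) = qi p - qi q" "qj (p - q) = qj p - qj q" "qk (p - q) = qk p - qk q"
  "qre (- q) = - qre q" "qi (- q) = - qi q" "qj (- q) = - qj q" "qk (- q) = - qk q"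
  "qre (r *\<^sub>R q) = r * qre q" "qi (r *\<^sub>R q) = r * qi q" "qj (r *\<^sub>R q) = r * qj q" "qk (r *\<^sub>R q) = r * qk q"
  "qre (p * q) = qre p * qre q - qi p * qi q - qj p * qj q - qk p * qk q"
  "qi (p * q) = qre p * qi q + qi p * qre q + qj p * qk q - qk p * qj q"
  "qj (p * q) = qre p * qj q - qi p * qk q + qj p * qre q + qk p * qi q"
  "qk (p * q) = qre p * qk q + qi p * qj q - qj p * qi q + qk p * qre q"
  "qre (qcnj q) = qre q" "qi (qcnj q) = - qi q" "qj (qcnj q) = - qj q" "qk (qcnj q) = - qk q"
  "qre (qof_real r) = r" "qi (qof_real r) = 0" "qj (qof_real r) = 0" "qk (qof_real r) = 0"
  by (simp_all add: zero_quat_def one_quat_def plus_quat_def minus_quat_def uminus_quat_def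
      scaleR_quat_def times_quat_def qcnj_def qof_real_def)

instance quat :: real_algebra_1
  by standard (simp_all add: quat_eq_iff algebra_simps)

lemma qre_sum: "qre (sum f S) = (\<Sum>x\<in>S. qre (f x))"
  by (induction S rule: infinite_finite_induct) auto

lemma qof_real_eq: "qof_real r = r *\<^sub>R 1"
  by (simp add: quat_eq_iff)

lemma qn_mult: "qn (p * q) = qn p * qn q"
  by (simp add: qn_def power2_eq_square algebra_simps)

lemma qn_nonneg: "qn q \<ge> 0"
  by (simp add: qn_def)

lemma qn_eq_0_iff: "qn q = 0 \<longleftrightarrow> q = 0"
  by (auto simp: qn_def quat_eq_iff add_nonneg_eq_0_iff)

lemma qn_pos: "q \<noteq> 0 \<Longrightarrow> qn q > 0"
  using qn_nonneg[of q] qn_eq_0_iff[of q] by linarith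

lemma qn_uminus [simp]: "qn (- q) = qn q" by (simp add: qn_def)
lemma qn_scaleR: "qn (r *\<^sub>R q) = r\<^sup>2 * qn q" by (simp add: qn_def power2_eq_square algebra_simps)
lemma qn_one [simp]: "qn 1 = 1" by (simp add: qn_def)
lemma qn_zero [simp]: "qn 0 = 0" by (simp add: qn_def)
lemma qn_qcnj [simp]: "qn (qcnj q) = qn q" by (simp add: qn_def)

lemma qcnj_mult: "qcnj (p * q) = qcnj q * qcnj p"
  by (simp add: quat_eq_iff algebra_simps)
lemma qcnj_add: "qcnj (p + q) = qcnj p + qcnj q" by (simp add: quat_eq_iff)
lemma qcnj_diff: "qcnj (p - q) = qcnj p - qcnj q" by (simp add: quat_eq_iff)
lemma qcnj_minus: "qcnj (- q) = - qcnj q" by (simp add: quat_eq_iff)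
lemma qcnj_qcnj [simp]: "qcnj (qcnj q) = q" by (simp add: quat_eq_iff)
lemma qcnj_scaleR: "qcnj (r *\<^sub>R q) = r *\<^sub>R qcnj q" by (simp add: quat_eq_iff)
lemma qcnj_one [simp]: "qcnj 1 = 1" by (simp add: quat_eq_iff)
lemma qcnj_eq: "qcnj q = (2 * qre q) *\<^sub>R 1 - q" by (simp add: quat_eq_iff)

lemma mult_qcnj: "q * qcnj q = qn q *\<^sub>R 1"
  by (simp add: quat_eq_iff qn_def power2_eq_square algebra_simps)
lemma qcnj_mult_self: "qcnj q * q = qn q *\<^sub>R 1"
  by (simp add: quat_eq_iff qn_def power2_eq_square algebra_simps)

lemma qre_commute: "qre (p * q) = qre (q * p)"
  by (simp add: algebra_simps)

lemma quat_square: "q * q = (2 * qre q) *\<^sub>R q - qn q *\<^sub>R 1"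
  by (simp add: quat_eq_iff qn_def power2_eq_square algebra_simps)

lemma qinv_right: "q \<noteq> 0 \<Longrightarrow> q * qinv q = 1"
  using qn_pos[of q] by (simp add: qinv_def mult_qcnj)
lemma qinv_left: "q \<noteq> 0 \<Longrightarrow> qinv q * q = 1"
  using qn_pos[of q] by (simp add: qinv_def qcnj_mult_self)

lemma qinv_nz: "q \<noteq> 0 \<Longrightarrow> qinv q \<noteq> 0"
  using qinv_right by force

lemma mult_eq_0: "(p::quat) * q = 0 \<Longrightarrow> p = 0 \<or> q = 0"
  using qn_mult[of p q] by (simp add: qn_eq_0_iff[symmetric])

lemma qnorm_eq: "qnorm q = norm (quat_vec q)"
  by (simp add: qnorm_def qn_def quat_vec_def norm_vec_def L2_set_def sum_4 vector_def)

lemma quat_vec_add: "quat_vec (p + q) = quat_vec p + quat_vec q"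
  by (simp add: quat_vec_def vec_eq_iff forall_4 vector_def)
lemma quat_vec_scaleR: "quat_vec (r *\<^sub>R q) = r *\<^sub>R quat_vec q"
  by (simp add: quat_vec_def vec_eq_iff forall_4 vector_def)
lemma quat_vec_diff: "quat_vec (p - q) = quat_vec p - quat_vec q"
  by (simp add: quat_vec_def vec_eq_iff forall_4 vector_def)
lemma linear_quat_vec: "linear quat_vec"
  by (simp add: linearI quat_vec_add quat_vec_scaleR)


locale qalg =
  fixes A :: "quat set" and e :: "nat \<Rightarrow> quat"
  assumes one_A: "1 \<in> A"
    and add_A: "x \<in> A \<Longrightarrow> y \<in> A \<Longrightarrow> x + y \<in> A"
    and mult_A: "x \<in> A \<Longrightarrow> y \<in> A \<Longrightarrow> x * y \<in> A"
    and e_A: "i < 4 \<Longrightarrow> e i \<in> A"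
    and indep: "real_lin_indep4 e"
    and A_eq: "A = {(\<Sum>i<4. of_rat (c i) *\<^sub>R e i) | c :: nat \<Rightarrow> rat. True}"
begin

lemma A_iff: "x \<in> A \<longleftrightarrow> (\<exists>c. x = (\<Sum>i<4. of_rat (c i) *\<^sub>R e i))"
  using A_eq by auto

lemma A_I: "x = (\<Sum>i<4. of_rat (c i) *\<^sub>R e i) \<Longrightarrow> x \<in> A"
  unfolding A_iff by (rule exI)

lemma A_E: assumes "x \<in> A" obtains c where "x = (\<Sum>i<4. of_rat (c i) *\<^sub>R e i)"
  using assms unfolding A_iff by blast

lemma coord_unique:
  assumes "(\<Sum>i<4. r i *\<^sub>R e i) = (\<Sum>i<4. s i *\<^sub>R e i)" "i < 4"
  shows "r i = s i"
proof -
  have "(\<Sum>i<4. (r i - s i) *\<^sub>R e i) = 0"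
    using assms(1) by (simp add: scaleR_diff_left sum_subtractf)
  then have "\<forall>i<4. r i - s i = 0"
    using indep[unfolded real_lin_indep4_def, rule_format, of "\<lambda>i. r i - s i"] by blast
  then show ?thesis using assms(2) by simp
qed

lemma scaleR_rat_A: "x \<in> A \<Longrightarrow> of_rat q *\<^sub>R x \<in> A"
proof -
  assume "x \<in> A"
  then obtain c where c: "x = (\<Sum>i<4. of_rat (c i) *\<^sub>R e i)" unfolding A_iff by blast
  have "of_rat q *\<^sub>R x = (\<Sum>i<4. of_rat (q * c i) *\<^sub>R e i)"
    unfolding c scaleR_sum_right by (simp add: of_rat_mult)
  then show ?thesis by (rule A_I)
qed

lemma scaleR_Rats_A: "x \<in> A \<Longrightarrow> r \<in> \<rat> \<Longrightarrow> r *\<^sub>R x \<in> A"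
  by (erule Rats_cases) (simp add: scaleR_rat_A)

lemma zero_A: "0 \<in> A"
  using scaleR_rat_A[OF one_A, of 0] by simp

lemma uminus_A: "x \<in> A \<Longrightarrow> - x \<in> A"
  using scaleR_rat_A[of x "-1"] by simp

lemma diff_A: "x \<in> A \<Longrightarrow> y \<in> A \<Longrightarrow> x - y \<in> A"
  unfolding diff_conv_add_uminus by (rule add_A, assumption, rule uminus_A)

lemma sum_A: "(\<And>x. x \<in> S \<Longrightarrow> f x \<in> A) \<Longrightarrow> sum f S \<in> A"
proof (induction S rule: infinite_finite_induct)
  case (insert x F)
  then show ?case by (simp add: add_A)
qed (simp_all add: zero_A)

lemma one_coords: obtains u where "1 = (\<Sum>i<4. of_rat (u i) *\<^sub>R e i)" "\<exists>i<4. u i \<noteq> 0"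
proof -
  obtain u where u: "1 = (\<Sum>i<4. of_rat (u i) *\<^sub>R e i)" using one_A by (rule A_E)
  have "\<exists>i<4. u i \<noteq> 0"
  proof (rule ccontr)
    assume "\<not> ?thesis"
    then have "(\<Sum>i<4. of_rat (u i) *\<^sub>R e i) = (0::quat)" by simp
    with u show False by simp
  qed
  with u that show ?thesis by blast
qed

lemma real_A: assumes "r *\<^sub>R 1 \<in> A" shows "r \<in> \<rat>"
proof -
  obtain u where u: "1 = (\<Sum>i<4. of_rat (u i) *\<^sub>R e i)" and i: "\<exists>i<4. u i \<noteq> 0"
    by (rule one_coords)
  obtain w where w: "r *\<^sub>R 1 = (\<Sum>i<4. of_rat (w i) *\<^sub>R e i)" using assms by (rule A_E)
  have "r *\<^sub>R (1::quat) = r *\<^sub>R (\<Sum>i<4. of_rat (u i) *\<^sub>R e i)"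
    by (rule arg_cong[OF u])
  also have "\<dots> = (\<Sum>i<4. (r * of_rat (u i)) *\<^sub>R e i)"
    by (simp only: scaleR_sum_right scaleR_scaleR)
  finally have "(\<Sum>i<4. of_rat (w i) *\<^sub>R e i) = (\<Sum>i<4. (r * of_rat (u i)) *\<^sub>R e i)"
    using w by argo
  then have eq: "\<And>i. i < 4 \<Longrightarrow> of_rat (w i) = r * of_rat (u i)"
    by (rule coord_unique)
  from i obtain i where "i < 4" "u i \<noteq> 0" by blast
  with eq[of i] have "r = of_rat (w i / u i)" by (simp add: of_rat_divide)
  then show ?thesis by simp
qed

lemma re_A: assumes "x \<in> A" shows "qre x \<in> \<rat>"
proof -
  obtain u where u: "1 = (\<Sum>i<4. of_rat (u i) *\<^sub>R e i)" and i: "\<exists>i<4. u i \<noteq> 0"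
    by (rule one_coords)
  obtain c where c: "x = (\<Sum>i<4. of_rat (c i) *\<^sub>R e i)" using assms by (rule A_E)
  obtain y where y: "x * x = (\<Sum>i<4. of_rat (y i) *\<^sub>R e i)" using mult_A[OF assms assms] by (rule A_E)
  define t where "t = 2 * qre x"
  define n where "n = qn x"
  have "x * x = t *\<^sub>R x - n *\<^sub>R 1" by (simp add: quat_square t_def n_def)
  also have "\<dots> = t *\<^sub>R (\<Sum>i<4. of_rat (c i) *\<^sub>R e i) - n *\<^sub>R (\<Sum>i<4. of_rat (u i) *\<^sub>R e i)"
    using c u by argo
  also have "\<dots> = (\<Sum>i<4. (t * of_rat (c i) - n * of_rat (u i)) *\<^sub>R e i)"
    by (simp only: scaleR_sum_right scaleR_diff_left sum_subtractf scaleR_scaleR)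
  finally have "(\<Sum>i<4. of_rat (y i) *\<^sub>R e i) = (\<Sum>i<4. (t * of_rat (c i) - n * of_rat (u i)) *\<^sub>R e i)"
    using y by argo
  then have yeq: "\<And>i. i < 4 \<Longrightarrow> of_rat (y i) = t * of_rat (c i) - n * of_rat (u i)"
    by (rule coord_unique)
  show ?thesis
  proof (cases "\<exists>i<4. \<exists>j<4. c i * u j \<noteq> c j * u i")
    case True
    then obtain i j where ij: "i < 4" "j < 4" "c i * u j \<noteq> c j * u i" by blast
    have "of_rat (y i * u j - y j * u i) = t * of_rat (c i * u j - c j * u i)"
      unfolding of_rat_diff of_rat_mult yeq[OF ij(1)] yeq[OF ij(2)] by algebra
    moreover have "of_rat (c i * u j - c j * u i) \<noteq> (0::real)" using ij(3) by simp
    ultimately have "t = of_rat ((y i * u j - y j * u i) / (c i * u j - c j * u i))"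
      by (simp add: of_rat_divide field_simps)
    then have "t \<in> \<rat>" by simp
    then have "t / 2 \<in> \<rat>" by simp
    then show ?thesis unfolding t_def by simp
  next
    case False
    from i obtain i where i: "i < 4" "u i \<noteq> 0" by blast
    define l where "l = c i / u i"
    have cj: "\<And>j. j < 4 \<Longrightarrow> c j = l * u j"
    proof -
      fix j :: nat assume "j < 4"
      then have "c j * u i = c i * u j" using False i by blast
      then show "c j = l * u j" using i unfolding l_def by (simp add: field_simps)
    qed
    have "x = (\<Sum>j<4. of_rat l *\<^sub>R (of_rat (u j) *\<^sub>R e j))"
      unfolding c by (rule sum.cong) (auto simp: cj of_rat_mult)
    also have "\<dots> = of_rat l *\<^sub>R (\<Sum>j<4. of_rat (u j) *\<^sub>R e j)"
      by (simp only: scaleR_sum_right)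
    also have "\<dots> = of_rat l *\<^sub>R 1" using u by argo
    finally have "qre x = of_rat l" by simp
    then show ?thesis by simp
  qed
qed

lemma qcnj_A: "x \<in> A \<Longrightarrow> qcnj x \<in> A"
  by (simp add: qcnj_eq diff_A scaleR_Rats_A one_A re_A)

lemma qn_A: "x \<in> A \<Longrightarrow> qn x \<in> \<rat>"
proof -
  assume x: "x \<in> A"
  have eq: "qn x = qre (x * qcnj x)" by (simp add: mult_qcnj)
  have "qre (x * qcnj x) \<in> \<rat>" by (rule re_A[OF mult_A[OF x qcnj_A[OF x]]])
  then show ?thesis by (simp only: eq)
qed

lemma qinv_A: "x \<in> A \<Longrightarrow> qinv x \<in> A"
  by (simp add: qinv_def scaleR_Rats_A qcnj_A qn_A)

lemma im_A: "x \<in> A \<Longrightarrow> x - qre x *\<^sub>R 1 \<in> A"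
  by (simp add: diff_A scaleR_Rats_A one_A re_A)

end


lemma qinv_cancel1: "q \<noteq> 0 \<Longrightarrow> qinv q * (q * x) = x"
  by (simp add: mult.assoc[symmetric] qinv_left)
lemma qinv_cancel2: "q \<noteq> 0 \<Longrightarrow> q * (qinv q * x) = x"
  by (simp add: mult.assoc[symmetric] qinv_right)

lemma scaleR_one_mult: "(r *\<^sub>R (1::quat)) * x = r *\<^sub>R x" by simp
lemma mult_scaleR_one: "x * (r *\<^sub>R (1::quat)) = r *\<^sub>R x" by simp

lemma qtr_scaleR_one: "qtr (r *\<^sub>R 1) = 2 * r" by (simp add: qtr_def)

lemma det_nonsingular:
  assumes det: "dieudonne_det_sq (\<alpha>, \<beta>, \<gamma>, \<delta>) = 1"
    and h1: "\<alpha> * z + \<beta> = 0" and h2: "\<gamma> * z + \<delta> = 0"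
  shows False
proof -
  have b: "\<beta> = - (\<alpha> * z)" using h1 by (simp add: eq_neg_iff_add_eq_0 add.commute)
  have d: "\<delta> = - (\<gamma> * z)" using h2 by (simp add: eq_neg_iff_add_eq_0 add.commute)
  have 1: "qn (\<alpha> * \<delta>) = qn \<alpha> * qn \<gamma> * qn z" by (simp add: d qn_mult)
  have 2: "qn (\<beta> * \<gamma>) = qn \<alpha> * qn \<gamma> * qn z" by (simp add: b qn_mult)
  have "\<alpha> * qcnj \<gamma> * \<delta> * qcnj \<beta> = \<alpha> * (qcnj \<gamma> * \<gamma>) * (z * qcnj z) * qcnj \<alpha>"
    by (simp add: b d qcnj_minus qcnj_mult mult.assoc)
  also have "\<dots> = (qn \<gamma> * qn z) *\<^sub>R (\<alpha> * qcnj \<alpha>)"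
    by (simp add: qcnj_mult_self mult_qcnj)
  also have "\<dots> = (qn \<gamma> * qn z * qn \<alpha>) *\<^sub>R 1" by (simp add: mult_qcnj)
  finally have 3: "qtr (\<alpha> * qcnj \<gamma> * \<delta> * qcnj \<beta>) = 2 * (qn \<alpha> * qn \<gamma> * qn z)"
    by (simp add: qtr_def)
  have "dieudonne_det_sq (\<alpha>, \<beta>, \<gamma>, \<delta>) = 0"
    unfolding dieudonne_det_sq_def using 1 2 3 by simp
  with det show False by simp
qed

lemma fixed_iff:
  assumes det: "dieudonne_det_sq (\<alpha>, \<beta>, \<gamma>, \<delta>) = 1"
  shows "bdry_act (\<alpha>, \<beta>, \<gamma>, \<delta>) (Some z) = Some z \<longleftrightarrow> \<alpha> * z + \<beta> = z * (\<gamma> * z + \<delta>)"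
proof (cases "\<gamma> * z + \<delta> = 0")
  case True
  then show ?thesis using det_nonsingular[OF det _ True] by (auto simp: bdry_act_def)
next
  case False
  have "(\<alpha> * z + \<beta>) * qinv (\<gamma> * z + \<delta>) = z \<longleftrightarrow> \<alpha> * z + \<beta> = z * (\<gamma> * z + \<delta>)"
  proof
    assume "(\<alpha> * z + \<beta>) * qinv (\<gamma> * z + \<delta>) = z"
    then have "(\<alpha> * z + \<beta>) * qinv (\<gamma> * z + \<delta>) * (\<gamma> * z + \<delta>) = z * (\<gamma> * z + \<delta>)" by simp
    then show "\<alpha> * z + \<beta> = z * (\<gamma> * z + \<delta>)" using False by (simp add: mult.assoc qinv_left)
  next
    assume "\<alpha> * z + \<beta> = z * (\<gamma> * z + \<delta>)"
    then show "(\<alpha> * z + \<beta>) * qinv (\<gamma> * z + \<delta>) = z" using False by (simp add: mult.assoc qinv_right)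
  qed
  then show ?thesis using False by (simp add: bdry_act_def)
qed


lemma M0_re:
  assumes "a * a - (2 * qre d) *\<^sub>R a + qn d *\<^sub>R 1 = 0"
  shows "qre a = qre d"
proof (rule ccontr)
  assume ne: "qre a \<noteq> qre d"
  have e: "qre a * qre a - qi a * qi a - qj a * qj a - qk a * qk a - 2 * qre d * qre a + qn d = 0"
    "2 * (qre a - qre d) * qi a = 0" "2 * (qre a - qre d) * qj a = 0" "2 * (qre a - qre d) * qk a = 0"
    using assms by (simp_all add: quat_eq_iff algebra_simps)
  from e(2-4) ne have z: "qi a = 0" "qj a = 0" "qk a = 0" by auto
  with e(1) have "(qre a - qre d)^2 + (qi d)^2 + (qj d)^2 + (qk d)^2 = 0"
    by (simp add: qn_def power2_eq_square algebra_simps)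
  then have "(qre a - qre d)^2 = 0"
    by (smt (verit) zero_le_power2)
  with ne show False by simp
qed

lemma stepA:
  fixes \<alpha> \<beta> \<gamma> \<delta> s :: quat
  assumes g: "\<gamma> \<noteq> 0"
    and fix_s: "\<alpha> * s + \<beta> = s * (\<gamma> * s + \<delta>)"
    and uniq: "\<And>z. \<alpha> * z + \<beta> = z * (\<gamma> * z + \<delta>) \<Longrightarrow> z = s"
  shows "2 * qre (s * \<gamma>) = qre \<alpha> - qre \<delta>"
proof -
  define a where "a = \<gamma> * s + \<delta>"
  define d where "d = \<alpha> - s * \<gamma>"
  define M where "M = a * a - (2 * qre d) *\<^sub>R a + qn d *\<^sub>R 1"
  have "M = 0"
  proof (rule ccontr)
    assume M: "M \<noteq> 0"
    define c where "c = - \<gamma>"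
    define X where "X = a * c - c * qcnj d"
    define w where "w = qinv M * X"
    have Ma: "M * a = a * M" by (simp add: M_def algebra_simps)
    have Mia: "qinv M * a = a * qinv M"
    proof -
      have "qinv M * a = qinv M * a * (M * qinv M)" using M by (simp add: qinv_right)
      also have "\<dots> = qinv M * (M * a) * qinv M" by (simp add: Ma mult.assoc)
      also have "\<dots> = a * qinv M" using M by (simp add: qinv_cancel1)
      finally show ?thesis .
    qed
    have dd: "qcnj d + d = (2 * qre d) *\<^sub>R 1" by (simp add: qcnj_eq)
    have e1: "a * c * qcnj d + a * c * d = (2 * qre d) *\<^sub>R (a * c)"
    proof -
      have "a * c * qcnj d + a * c * d = (a * c) * (qcnj d + d)" by (simp only: distrib_left)
      also have "\<dots> = (2 * qre d) *\<^sub>R (a * c)" by (simp only: dd mult_scaleR_one)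
      finally show ?thesis .
    qed
    have aX: "a * X - X * d = M * c"
    proof -
      have "a * X - X * d = a * a * c - (a * c * qcnj d + a * c * d) + c * (qcnj d * d)"
        by (simp add: X_def algebra_simps)
      also have "\<dots> = M * c" by (simp only: e1 qcnj_mult_self) (simp add: M_def algebra_simps)
      finally show ?thesis .
    qed
    have aw: "a * w = qinv M * (a * X)" by (simp only: w_def mult.assoc[symmetric] Mia)
    have wd: "w * d = qinv M * (X * d)" by (simp only: w_def mult.assoc)
    have "a * w - w * d = qinv M * (a * X - X * d)"
      by (simp only: aw wd right_diff_distrib)
    also have "\<dots> = c" using M by (simp add: aX qinv_cancel1)
    finally have sylv: "a * w + \<gamma> = w * d" by (simp add: c_def algebra_simps)
    have wnz: "w \<noteq> 0" using sylv g by auto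
    define z where "z = s + qinv w"
    have dw: "d * qinv w = qinv w * a + qinv w * \<gamma> * qinv w"
    proof -
      have "d * qinv w = qinv w * (w * d) * qinv w" using wnz by (simp add: qinv_cancel1)
      also have "\<dots> = qinv w * (a * w + \<gamma>) * qinv w" by (simp add: sylv)
      also have "\<dots> = qinv w * a + qinv w * \<gamma> * qinv w"
        using wnz by (simp add: algebra_simps mult.assoc qinv_right)
      finally show ?thesis .
    qed
    have "\<alpha> * z + \<beta> = z * (\<gamma> * z + \<delta>)"
    proof -
      have "z * (\<gamma> * z + \<delta>) = (s + qinv w) * (a + \<gamma> * qinv w)"
        by (simp add: z_def a_def algebra_simps)
      also have "\<dots> = s * a + s * \<gamma> * qinv w + (qinv w * a + qinv w * \<gamma> * qinv w)"
        by (simp add: algebra_simps)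
      also have "\<dots> = s * a + s * \<gamma> * qinv w + d * qinv w" by (simp add: dw)
      also have "\<dots> = s * a + \<alpha> * qinv w"
        by (simp add: d_def algebra_simps)
      also have "\<dots> = \<alpha> * s + \<beta> + \<alpha> * qinv w"
        using fix_s by (simp add: a_def)
      also have "\<dots> = \<alpha> * z + \<beta>" by (simp add: z_def algebra_simps)
      finally show ?thesis by simp
    qed
    then have "z = s" by (rule uniq)
    then have "qinv w = 0" by (simp add: z_def)
    with qinv_nz[OF wnz] show False by simp
  qed
  then have "qre a = qre d" unfolding M_def by (rule M0_re)
  then show ?thesis by (simp add: a_def d_def algebra_simps)
qed


definition qim :: "quat \<Rightarrow> quat" where "qim x = x - qre x *\<^sub>R 1"

lemma qre_qim [simp]: "qre (qim x) = 0" by (simp add: qim_def)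

lemma I1:
  assumes "qre v = 0" "2 * \<tau> = qre B - qre D"
  shows "(\<tau> *\<^sub>R 1 + v) * (\<tau> *\<^sub>R 1 + v) + (\<tau> *\<^sub>R 1 + v) * D - B * (\<tau> *\<^sub>R 1 + v) - E
       = v * qim D - qim B * v - qn v *\<^sub>R 1 + (\<tau>\<^sup>2 *\<^sub>R 1 + \<tau> *\<^sub>R D - \<tau> *\<^sub>R B - E)"
proof -
  have b: "qre B = 2 * \<tau> + qre D" using assms(2) by simp
  show ?thesis using assms(1) by (simp add: b quat_eq_iff qim_def qn_def power2_eq_square algebra_simps)
qed

lemma I2:
  assumes "qre v = 0" "qre Dv = 0" "qre Bv = 0"
  shows "(v + \<mu> *\<^sub>R (Dv + Bv)) * Dv - Bv * (v + \<mu> *\<^sub>R (Dv + Bv)) - qn (v + \<mu> *\<^sub>R (Dv + Bv)) *\<^sub>R 1 + C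
    = (v * Dv - Bv * v - qn v *\<^sub>R 1 + C)
      + (\<mu> * (- qre ((Bv - Dv) * (Dv + Bv)) + 2 * qre (v * (Dv + Bv)) - \<mu> * qn (Dv + Bv))) *\<^sub>R 1"
  using assms by (simp add: quat_eq_iff qn_def power2_eq_square algebra_simps)

lemma I3:
  assumes "qre v = 0" "qre Dv = 0" "Bv = - Dv"
  shows "(Bv - Dv - v) * Dv - Bv * (Bv - Dv - v) - qn (Bv - Dv - v) *\<^sub>R 1 + C
    = v * Dv - Bv * v - qn v *\<^sub>R 1 + C"
  using assms by (simp add: quat_eq_iff qn_def power2_eq_square algebra_simps)

lemma I4:
  assumes "qre v = 0" "qre Bv = 0"
  shows "v * (Dv + Bv) = (v * Dv - Bv * v) + (2 * qre (v * Bv)) *\<^sub>R 1"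
  using assms by (simp add: quat_eq_iff algebra_simps)

lemma stepC:
  fixes D B E t0 :: quat
  assumes root: "t0 * t0 + t0 * D - B * t0 - E = 0"
    and uniq: "\<And>t. t * t + t * D - B * t - E = 0 \<Longrightarrow> t = t0"
    and re: "2 * qre t0 = qre B - qre D"
  defines "\<tau> \<equiv> qre t0"
  defines "S \<equiv> qim D + qim B"
  defines "T \<equiv> qim B - qim D"
  defines "C \<equiv> \<tau>\<^sup>2 *\<^sub>R 1 + \<tau> *\<^sub>R D - \<tau> *\<^sub>R B - E"
  shows "(S = 0 \<and> t0 = \<tau> *\<^sub>R 1 + (1/2) *\<^sub>R T) \<or>
         (S \<noteq> 0 \<and> t0 = \<tau> *\<^sub>R 1 + ((qre (T * S) / 2) *\<^sub>R 1 - qim C) * qinv S)"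
proof -
  define v0 where "v0 = qim t0"
  define Q where "Q v = v * qim D - qim B * v - qn v *\<^sub>R 1 + C" for v
  have t0: "t0 = \<tau> *\<^sub>R 1 + v0" by (simp add: v0_def qim_def \<tau>_def)
  have re': "2 * \<tau> = qre B - qre D" using re by (simp add: \<tau>_def)
  have P: "\<And>v. qre v = 0 \<Longrightarrow> (\<tau> *\<^sub>R 1 + v) * (\<tau> *\<^sub>R 1 + v) + (\<tau> *\<^sub>R 1 + v) * D - B * (\<tau> *\<^sub>R 1 + v) - E = Q v"
    unfolding Q_def C_def by (rule I1[OF _ re'])
  have pv0: "qre v0 = 0" by (simp add: v0_def)
  have Qv0: "Q v0 = 0" using root P[OF pv0] t0 by simp
  have uq: "\<And>v. qre v = 0 \<Longrightarrow> Q v = 0 \<Longrightarrow> v = v0"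
  proof -
    fix v assume "qre v = 0" "Q v = 0"
    then have "\<tau> *\<^sub>R 1 + v = t0" using P uniq by metis
    then show "v = v0" using t0 by simp
  qed
  have pS: "qre S = 0" by (simp add: S_def)
  show ?thesis
  proof (cases "S = 0")
    case True
    have Bv: "qim B = - qim D" using True by (simp add: S_def eq_neg_iff_add_eq_0 add.commute)
    have "Q (T - v0) = Q v0" unfolding Q_def T_def
      by (rule I3[OF pv0 _ Bv]) simp
    with Qv0 have "Q (T - v0) = 0" by simp
    moreover have "qre (T - v0) = 0" using pv0 by (simp add: T_def)
    ultimately have "T - v0 = v0" using uq by blast
    then have "v0 = (1/2) *\<^sub>R T" by (simp add: quat_eq_iff)
    with True t0 show ?thesis by simp
  next
    case False
    have qnS: "qn S > 0" using False by (rule qn_pos)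
    define \<mu> where "\<mu> = (- qre (T * S) + 2 * qre (v0 * S)) / qn S"
    have "Q (v0 + \<mu> *\<^sub>R S) = Q v0 + (\<mu> * (- qre (T * S) + 2 * qre (v0 * S) - \<mu> * qn S)) *\<^sub>R 1"
      unfolding Q_def S_def T_def by (rule I2[OF pv0]) simp_all
    also have "- qre (T * S) + 2 * qre (v0 * S) - \<mu> * qn S = 0"
      using qnS by (simp add: \<mu>_def)
    finally have "Q (v0 + \<mu> *\<^sub>R S) = 0" using Qv0 by simp
    moreover have "qre (v0 + \<mu> *\<^sub>R S) = 0" using pv0 pS by simp
    ultimately have "v0 + \<mu> *\<^sub>R S = v0" using uq by blast
    then have "\<mu> = 0" using False by simp
    then have reS: "qre (v0 * S) = qre (T * S) / 2" using qnS by (simp add: \<mu>_def)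
    have "v0 * S = (v0 * qim D - qim B * v0) + (2 * qre (v0 * qim B)) *\<^sub>R 1"
      unfolding S_def by (rule I4[OF pv0]) simp
    also have "v0 * qim D - qim B * v0 = qn v0 *\<^sub>R 1 - C" using Qv0 by (simp add: Q_def algebra_simps)
    finally have vS: "v0 * S = (qn v0 + 2 * qre (v0 * qim B)) *\<^sub>R 1 - C" by (simp add: algebra_simps)
    have "v0 * S = qre (v0 * S) *\<^sub>R 1 - qim C"
      by (subst (2) vS, subst vS) (simp add: quat_eq_iff qim_def)
    also have "\<dots> = (qre (T * S) / 2) *\<^sub>R 1 - qim C" by (simp only: reS)
    finally have "v0 * S * qinv S = ((qre (T * S) / 2) *\<^sub>R 1 - qim C) * qinv S" by simp
    then have "v0 = ((qre (T * S) / 2) *\<^sub>R 1 - qim C) * qinv S"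
      using False by (simp add: mult.assoc qinv_right)
    with False t0 show ?thesis by simp
  qed
qed


context qalg
begin

lemma qim_A: "x \<in> A \<Longrightarrow> qim x \<in> A"
  unfolding qim_def by (rule im_A)

lemma parabolic_fixed_in_A:
  assumes OA: "\<O> \<subseteq> A"
    and pfp: "parabolic_fixed_point (SL2 \<O>) (Some s)"
  shows "s \<in> A"
proof -
  obtain g where gS: "g \<in> SL2 \<O>" and par: "parabolic g" and fs: "bdry_act g (Some s) = Some s"
    using pfp unfolding parabolic_fixed_point_def by blast
  obtain \<alpha> \<beta> \<gamma> \<delta> where g: "g = (\<alpha>, \<beta>, \<gamma>, \<delta>)" by (cases g) auto
  have inO: "\<alpha> \<in> \<O>" "\<beta> \<in> \<O>" "\<gamma> \<in> \<O>" "\<delta> \<in> \<O>" and det: "dieudonne_det_sq (\<alpha>, \<beta>, \<gamma>, \<delta>) = 1"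
    using gS by (simp_all add: g SL2_def)
  have inA: "\<alpha> \<in> A" "\<beta> \<in> A" "\<gamma> \<in> A" "\<delta> \<in> A" using inO OA by auto
  have uniqx: "\<And>x. bdry_act g x = x \<Longrightarrow> x = Some s"
    using par fs unfolding parabolic_def by blast
  have gnz: "\<gamma> \<noteq> 0"
  proof
    assume "\<gamma> = 0"
    then have "bdry_act g None = None" by (simp add: g bdry_act_def)
    then show False using uniqx by blast
  qed
  have fix_s: "\<alpha> * s + \<beta> = s * (\<gamma> * s + \<delta>)"
    using fs fixed_iff[OF det] by (simp add: g)
  have uniq: "\<And>z. \<alpha> * z + \<beta> = z * (\<gamma> * z + \<delta>) \<Longrightarrow> z = s"
  proof -
    fix z assume "\<alpha> * z + \<beta> = z * (\<gamma> * z + \<delta>)"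
    then have "bdry_act g (Some z) = Some z" using fixed_iff[OF det] by (simp add: g)
    then show "z = s" using uniqx by blast
  qed
  have reA: "2 * qre (s * \<gamma>) = qre \<alpha> - qre \<delta>" by (rule stepA[OF gnz fix_s uniq])
  define D where "D = qinv \<gamma> * \<delta> * \<gamma>"
  define E where "E = \<beta> * \<gamma>"
  define t0 where "t0 = s * \<gamma>"
  have key: "\<And>t. (t * t + t * D - \<alpha> * t - E) * qinv \<gamma>
      = (t * qinv \<gamma>) * (\<gamma> * (t * qinv \<gamma>) + \<delta>) - (\<alpha> * (t * qinv \<gamma>) + \<beta>)"
    using gnz by (simp add: D_def E_def algebra_simps qinv_cancel1 qinv_right)
  have root: "t0 * t0 + t0 * D - \<alpha> * t0 - E = 0"
  proof -
    have "t0 * qinv \<gamma> = s" using gnz by (simp add: t0_def mult.assoc qinv_right)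
    then have "(t0 * t0 + t0 * D - \<alpha> * t0 - E) * qinv \<gamma> = 0" using key[of t0] fix_s by simp
    then show ?thesis using qinv_nz[OF gnz] mult_eq_0 by blast
  qed
  have uniqt: "\<And>t. t * t + t * D - \<alpha> * t - E = 0 \<Longrightarrow> t = t0"
  proof -
    fix t assume "t * t + t * D - \<alpha> * t - E = 0"
    then have "(t * qinv \<gamma>) * (\<gamma> * (t * qinv \<gamma>) + \<delta>) - (\<alpha> * (t * qinv \<gamma>) + \<beta>) = 0"
      using key[of t] by simp
    then have "t * qinv \<gamma> = s" using uniq by simp
    then have "t * qinv \<gamma> * \<gamma> = s * \<gamma>" by simp
    then show "t = t0" using gnz by (simp add: t0_def mult.assoc qinv_left)
  qed
  have reD: "qre D = qre \<delta>"
    using gnz by (simp only: D_def mult.assoc qre_commute[of "qinv \<gamma>"]) (simp add: mult.assoc[symmetric] qinv_right)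
  have re: "2 * qre t0 = qre \<alpha> - qre D" using reA reD by (simp add: t0_def)
  define \<tau> where "\<tau> = qre t0"
  define S where "S = qim D + qim \<alpha>"
  define T where "T = qim \<alpha> - qim D"
  define C where "C = \<tau>\<^sup>2 *\<^sub>R 1 + \<tau> *\<^sub>R D - \<tau> *\<^sub>R \<alpha> - E"
  have DA: "D \<in> A" using inA by (simp add: D_def mult_A qinv_A gnz)
  have EA: "E \<in> A" using inA by (simp add: E_def mult_A)
  have tauQ: "\<tau> \<in> \<rat>"
  proof -
    have eq: "\<tau> = (qre \<alpha> - qre \<delta>) / 2" using reA by (simp add: \<tau>_def t0_def)
    have "(qre \<alpha> - qre \<delta>) / 2 \<in> \<rat>" by (intro Rats_divide Rats_diff re_A inA) simp
    then show ?thesis by (simp only: eq)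
  qed
  have SA: "S \<in> A" unfolding S_def by (intro add_A qim_A DA inA)
  have TA: "T \<in> A" unfolding T_def by (intro diff_A qim_A DA inA)
  have CA: "C \<in> A" unfolding C_def
    by (intro diff_A add_A scaleR_Rats_A one_A DA inA EA tauQ Rats_power)
  have tA: "\<tau> *\<^sub>R 1 \<in> A" by (intro scaleR_Rats_A one_A tauQ)
  have "t0 \<in> A"
    using stepC[OF root uniqt re, folded \<tau>_def, folded S_def T_def C_def]
  proof
    assume "S = 0 \<and> t0 = \<tau> *\<^sub>R 1 + (1 / 2) *\<^sub>R T"
    then show "t0 \<in> A" using tA TA by (simp add: add_A scaleR_Rats_A)
  next
    assume "S \<noteq> 0 \<and> t0 = \<tau> *\<^sub>R 1 + ((qre (T * S) / 2) *\<^sub>R 1 - qim C) * qinv S"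
    moreover have "((qre (T * S) / 2) *\<^sub>R 1 - qim C) * qinv S \<in> A"
      by (intro mult_A diff_A scaleR_Rats_A one_A qim_A CA qinv_A SA Rats_divide re_A TA) simp
    ultimately show "t0 \<in> A" using tA by (simp add: add_A)
  qed
  then have "t0 * qinv \<gamma> \<in> A" by (intro mult_A qinv_A inA)
  moreover have "t0 * qinv \<gamma> = s" using gnz by (simp add: t0_def mult.assoc qinv_right)
  ultimately show ?thesis by simp
qed

end


lemma sum4: "(\<Sum>i<(4::nat). f i) = f 0 + f 1 + f 2 + f 3"
  by (simp add: numeral_eq_Suc lessThan_Suc add.assoc add.commute add.left_commute)

lemma common_denom:
  fixes R :: "real set"
  assumes "finite R" "R \<subseteq> \<rat>"
  shows "\<exists>N::int. N > 0 \<and> (\<forall>r\<in>R. of_int N * r \<in> \<int>)"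
  using assms
proof (induction R rule: finite_induct)
  case empty
  then show ?case by (intro exI[of _ 1]) simp
next
  case (insert q R)
  then obtain N where N: "N > 0" "\<forall>r\<in>R. of_int N * r \<in> \<int>" by auto
  from insert.prems obtain q' where q': "q = of_rat q'" by (auto elim: Rats_cases)
  obtain p d where pd: "quotient_of q' = (p, d)" by (cases "quotient_of q'")
  have d: "d > 0" using quotient_of_denom_pos[OF pd] .
  have qq: "q' = of_int p / of_int d" using quotient_of_div[OF pd] .
  show ?case
  proof (intro exI[of _ "N * d"] conjI ballI)
    show "N * d > 0" using N d by simp
    fix r assume "r \<in> insert q R"
    then show "of_int (N * d) * r \<in> \<int>"
    proof
      assume "r = q"
      have e: "of_int (N * d) * r = (of_int (N * p) :: real)"
        unfolding \<open>r = q\<close> q' qq using d by (simp add: of_rat_divide field_simps)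
      show ?thesis unfolding e by (rule Ints_of_int)
    next
      assume "r \<in> R"
      then have "of_int N * r \<in> \<int>" using N by auto
      then have "of_int d * (of_int N * r) \<in> \<int>" by (rule Ints_mult[OF Ints_of_int])
      then show ?thesis by (simp add: algebra_simps)
    qed
  qed
qed

lemma quat_vec_eq0: "quat_vec x = 0 \<Longrightarrow> x = 0"
  by (simp add: quat_vec_def vec_eq_iff forall_4 vector_def quat_eq_iff)

context qalg
begin

definition Lat :: "int \<Rightarrow> quat set" where
  "Lat N = {x. \<exists>r. x = (\<Sum>i<4. r i *\<^sub>R e i) \<and> (\<forall>i<4. of_int N * r i \<in> \<int>)}"

lemma coord_bound: "\<exists>B>0. \<forall>r. \<forall>i<4. B * \<bar>r i\<bar> \<le> qnorm (\<Sum>i<4. r i *\<^sub>R e i)"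
proof -
  define Ev where "Ev c = quat_vec ((c$1) *\<^sub>R e 0 + (c$2) *\<^sub>R e 1 + (c$3) *\<^sub>R e 2 + (c$4) *\<^sub>R e 3)"
    for c :: "real^4"
  have lin: "linear Ev"
    by (rule linearI) (simp_all add: Ev_def quat_vec_add[symmetric] quat_vec_scaleR[symmetric]
        algebra_simps scaleR_add_right)
  have inj: "inj Ev"
    unfolding linear_injective_0[OF lin]
  proof (intro allI impI)
    fix c :: "real^4" assume "Ev c = 0"
    then have z: "(c$1) *\<^sub>R e 0 + (c$2) *\<^sub>R e 1 + (c$3) *\<^sub>R e 2 + (c$4) *\<^sub>R e 3 = 0"
      unfolding Ev_def by (rule quat_vec_eq0)
    define r where "r i = (if i = 0 then c$1 else if i = 1 then c$2 else if i = 2 then c$3 else c$4)" for i :: nat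
    have "(\<Sum>i<4. r i *\<^sub>R e i) = 0" using z by (simp add: sum4 r_def)
    then have "\<forall>i<4. r i = 0" using indep unfolding real_lin_indep4_def by blast
    then have "c$1 = 0" "c$2 = 0" "c$3 = 0" "c$4 = 0"
      by (auto simp: r_def dest: spec[of _ 0] spec[of _ 1] spec[of _ 2] spec[of _ 3])
    then show "c = 0" by (simp add: vec_eq_iff forall_4)
  qed
  obtain B where B: "B > 0" "\<And>x. B * norm x \<le> norm (Ev x)"
    using linear_inj_bounded_below_pos[OF lin inj] by blast
  show ?thesis
  proof (intro exI[of _ B] conjI allI impI)
    show "B > 0" by fact
    fix r :: "nat \<Rightarrow> real" and i :: nat assume i: "i < 4"
    define c :: "real^4" where "c = vector [r 0, r 1, r 2, r 3]"
    have Evc: "Ev c = quat_vec (\<Sum>i<4. r i *\<^sub>R e i)" by (simp add: Ev_def c_def sum4 vector_def)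
    have "\<bar>r i\<bar> \<le> norm c"
    proof -
      have "i = 0 \<or> i = 1 \<or> i = 2 \<or> i = 3" using i by auto
      then show ?thesis using component_le_norm_cart[of c 1] component_le_norm_cart[of c 2]
          component_le_norm_cart[of c 3] component_le_norm_cart[of c 4]
        by (auto simp: c_def vector_def)
    qed
    then have "B * \<bar>r i\<bar> \<le> B * norm c" using B(1) by simp
    also have "\<dots> \<le> norm (Ev c)" by (rule B(2))
    finally show "B * \<bar>r i\<bar> \<le> qnorm (\<Sum>i<4. r i *\<^sub>R e i)" by (simp add: Evc qnorm_eq)
  qed
qed


lemma Lat_finite:
  assumes N: "N > 0"
  shows "finite {x \<in> Lat N. qn x \<le> Y}"
proof -
  obtain B where B: "B > 0" "\<And>r i. i < 4 \<Longrightarrow> B * \<bar>r i\<bar> \<le> qnorm (\<Sum>i<4. r i *\<^sub>R e i)"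
    using coord_bound by blast
  define K where "K = \<lceil>of_int N * sqrt Y / B\<rceil>"
  define f where "f = (\<lambda>(m0::int, m1::int, m2::int, m3::int).
     (of_int m0 / of_int N) *\<^sub>R e 0 + (of_int m1 / of_int N) *\<^sub>R e 1 +
     (of_int m2 / of_int N) *\<^sub>R e 2 + (of_int m3 / of_int N) *\<^sub>R e 3)"
  have "{x \<in> Lat N. qn x \<le> Y} \<subseteq> f ` ({-K..K} \<times> {-K..K} \<times> {-K..K} \<times> {-K..K})"
  proof
    fix x assume "x \<in> {x \<in> Lat N. qn x \<le> Y}"
    then obtain r where x: "x = (\<Sum>i<4. r i *\<^sub>R e i)" and rI: "\<forall>i<4. of_int N * r i \<in> \<int>"
      and Y: "qn x \<le> Y" unfolding Lat_def by blast
    have "\<forall>i. \<exists>k. i < 4 \<longrightarrow> of_int N * r i = of_int k"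
      using rI by (metis Ints_cases)
    then obtain m where m: "\<And>i. i < 4 \<Longrightarrow> of_int N * r i = of_int (m i)"
      using choice[of "\<lambda>i k. i < 4 \<longrightarrow> of_int N * r i = of_int k"] by blast
    have rm: "\<And>i. i < 4 \<Longrightarrow> r i = of_int (m i) / of_int N"
      using m N by (simp add: field_simps)
    have mb: "\<And>i. i < 4 \<Longrightarrow> m i \<in> {-K..K}"
    proof -
      fix i :: nat assume i: "i < 4"
      have "B * \<bar>r i\<bar> \<le> qnorm x" using B(2)[OF i] x by simp
      also have "\<dots> \<le> sqrt Y" unfolding qnorm_def using Y by simp
      finally have "\<bar>r i\<bar> \<le> sqrt Y / B" using B(1) by (simp add: field_simps)
      then have "of_int N * \<bar>r i\<bar> \<le> of_int N * (sqrt Y / B)" using N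
        by (intro mult_left_mono) auto
      then have "of_int N * \<bar>r i\<bar> \<le> of_int N * sqrt Y / B" by simp
      moreover have "\<bar>of_int (m i)\<bar> = of_int N * \<bar>r i\<bar>"
        unfolding m[OF i, symmetric] using N by (simp add: abs_mult)
      ultimately have "\<bar>of_int (m i)\<bar> \<le> of_int N * sqrt Y / B" by simp
      then have "\<bar>m i\<bar> \<le> K" unfolding K_def by linarith
      then show "m i \<in> {-K..K}" by (simp add: abs_le_iff)
    qed
    have "x = f (m 0, m 1, m 2, m 3)"
      by (simp add: x f_def sum4 rm)
    moreover have "(m 0, m 1, m 2, m 3) \<in> {-K..K} \<times> {-K..K} \<times> {-K..K} \<times> {-K..K}"
      using mb by simp
    ultimately show "x \<in> f ` ({-K..K} \<times> {-K..K} \<times> {-K..K} \<times> {-K..K})" by blast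
  qed
  then show ?thesis by (rule finite_subset) simp
qed

lemma order_rep:
  assumes "quat_order A \<O>"
  obtains S where "finite S" "S \<subseteq> A" "\<And>b. b \<in> \<O> \<Longrightarrow> \<exists>k. b = (\<Sum>s\<in>S. of_int (k s) *\<^sub>R s)"
proof -
  obtain S where S: "finite S" "S \<subseteq> \<O>"
    "\<O> = {(\<Sum>s\<in>S. of_int (k s) *\<^sub>R s) | k :: quat \<Rightarrow> int. True}"
    "A = {(\<Sum>s\<in>S. of_rat (c s) *\<^sub>R s) | c :: quat \<Rightarrow> rat. True}"
    using assms unfolding quat_order_def by blast
  have "S \<subseteq> A"
  proof
    fix x assume x: "x \<in> S"
    have "x = (\<Sum>s\<in>S. of_rat (if s = x then 1 else 0) *\<^sub>R s)"
      using x S(1) by (simp add: if_distrib[of of_rat] if_distrib[of "\<lambda>t. t *\<^sub>R _"] sum.delta' cong: if_cong)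
    then have "x \<in> {(\<Sum>s\<in>S. of_rat (c s) *\<^sub>R s) | c :: quat \<Rightarrow> rat. True}"
      by (intro CollectI exI[of _ "\<lambda>s. if s = x then 1 else 0"]) simp
    then show "x \<in> A" using S(4) by simp
  qed
  moreover have "\<And>b. b \<in> \<O> \<Longrightarrow> \<exists>k. b = (\<Sum>s\<in>S. of_int (k s) *\<^sub>R s)"
    using S(3) by blast
  ultimately show ?thesis using that S(1) by blast
qed

lemma order_sub_A:
  assumes "quat_order A \<O>"
  shows "\<O> \<subseteq> A"
proof
  fix b assume b: "b \<in> \<O>"
  obtain S where S: "finite S" "S \<subseteq> A" "\<And>b. b \<in> \<O> \<Longrightarrow> \<exists>k. b = (\<Sum>s\<in>S. of_int (k s) *\<^sub>R s)"
    using order_rep[OF assms] by blast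
  obtain k where k: "b = (\<Sum>s\<in>S. of_int (k s) *\<^sub>R s)" using S(3)[OF b] by blast
  show "b \<in> A" unfolding k
    by (rule sum_A, rule scaleR_Rats_A) (use S(2) in auto)
qed

lemma order_Lat:
  assumes "quat_order A \<O>"
  shows "\<exists>N>0. \<O> \<subseteq> Lat N"
proof -
  obtain S where S: "finite S" "S \<subseteq> A" "\<And>b. b \<in> \<O> \<Longrightarrow> \<exists>k. b = (\<Sum>s\<in>S. of_int (k s) *\<^sub>R s)"
    using order_rep[OF assms] by blast
  have "\<forall>x\<in>S. \<exists>c. x = (\<Sum>i<4. of_rat (c i) *\<^sub>R e i)"
  proof
    fix x assume "x \<in> S"
    then have "x \<in> A" using S(2) by blast
    then obtain c where "x = (\<Sum>i<4. of_rat (c i) *\<^sub>R e i)" by (rule A_E)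
    then show "\<exists>c. x = (\<Sum>i<4. of_rat (c i) *\<^sub>R e i)" by (rule exI[of _ c])
  qed
  then obtain cc where cc0: "\<forall>x\<in>S. x = (\<Sum>i<4. of_rat (cc x i) *\<^sub>R e i)"
    by (rule bchoice[THEN exE])
  have cc: "\<And>x. x \<in> S \<Longrightarrow> x = (\<Sum>i<4. of_rat (cc x i) *\<^sub>R e i)"
    using cc0 by (rule bspec)
  define R where "R = (\<lambda>(x, i). (of_rat (cc x i) :: real)) ` (S \<times> {..<4})"
  have fR: "finite R" "R \<subseteq> \<rat>" using S(1) by (auto simp: R_def)
  obtain N where N: "N > 0" "\<And>r. r \<in> R \<Longrightarrow> of_int N * r \<in> \<int>"
    using common_denom[OF fR] by blast
  have "\<O> \<subseteq> Lat N"
  proof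
    fix b assume b: "b \<in> \<O>"
    obtain k where k: "b = (\<Sum>s\<in>S. of_int (k s) *\<^sub>R s)" using S(3)[OF b] by blast
    define r :: "nat \<Rightarrow> real" where "r i = (\<Sum>s\<in>S. of_int (k s) * of_rat (cc s i))" for i
    have "b = (\<Sum>s\<in>S. of_int (k s) *\<^sub>R (\<Sum>i<4. of_rat (cc s i) *\<^sub>R e i))"
      unfolding k
    proof (rule sum.cong[OF refl])
      fix x assume "x \<in> S"
      from cc[OF this] show "of_int (k x) *\<^sub>R x = of_int (k x) *\<^sub>R (\<Sum>i<4. of_rat (cc x i) *\<^sub>R e i)"
        by (rule arg_cong)
    qed
    also have "\<dots> = (\<Sum>s\<in>S. \<Sum>i<4. (of_int (k s) * of_rat (cc s i)) *\<^sub>R e i)"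
      by (simp only: scaleR_sum_right scaleR_scaleR)
    also have "\<dots> = (\<Sum>i<4. \<Sum>s\<in>S. (of_int (k s) * of_rat (cc s i)) *\<^sub>R e i)"
      by (rule sum.swap)
    also have "\<dots> = (\<Sum>i<4. r i *\<^sub>R e i)"
      by (simp only: r_def scaleR_sum_left)
    finally have br: "b = (\<Sum>i<4. r i *\<^sub>R e i)" .
    have "\<forall>i<4. of_int N * r i \<in> \<int>"
    proof (intro allI impI)
      fix i :: nat assume i: "i < 4"
      have "of_int N * r i = (\<Sum>s\<in>S. of_int (k s) * (of_int N * of_rat (cc s i)))"
        by (simp add: r_def sum_distrib_left algebra_simps)
      also have "\<dots> \<in> \<int>"
      proof (rule Ints_sum, rule Ints_mult[OF Ints_of_int])
        fix s assume "s \<in> S"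
        then have "of_rat (cc s i) \<in> R" using i by (force simp: R_def)
        then show "(of_int N * of_rat (cc s i) :: real) \<in> \<int>" by (rule N(2))
      qed
      finally show "of_int N * r i \<in> \<int>" .
    qed
    then show "b \<in> Lat N" unfolding Lat_def using br by blast
  qed
  with N(1) show ?thesis by blast
qed

lemma order_denom:
  assumes "quat_order A \<O>" and s: "s \<in> A"
  shows "\<exists>D::int. D > 0 \<and> of_int D * qn s \<in> \<int> \<and> (\<forall>b\<in>\<O>. of_int D * qre (qcnj s * b) \<in> \<int>)"
proof -
  obtain S where S: "finite S" "S \<subseteq> A" "\<And>b. b \<in> \<O> \<Longrightarrow> \<exists>k. b = (\<Sum>s\<in>S. of_int (k s) *\<^sub>R s)"
    using order_rep[OF assms(1)] by blast
  define R where "R = insert (qn s) ((\<lambda>x. qre (qcnj s * x)) ` S)"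
  have "finite R" using S(1) by (simp add: R_def)
  moreover have "R \<subseteq> \<rat>"
  proof -
    have 1: "qn s \<in> \<rat>" by (rule qn_A[OF s])
    have 2: "\<forall>x\<in>S. qre (qcnj s * x) \<in> \<rat>"
    proof
      fix x assume "x \<in> S"
      then have "x \<in> A" using S(2) by blast
      then show "qre (qcnj s * x) \<in> \<rat>" by (intro re_A mult_A qcnj_A s)
    qed
    show ?thesis unfolding R_def insert_subset image_subset_iff using 1 2 by blast
  qed
  ultimately obtain D where D: "D > 0" "\<And>r. r \<in> R \<Longrightarrow> of_int D * r \<in> \<int>"
    using common_denom[of R] by blast
  show ?thesis
  proof (intro exI[of _ D] conjI ballI)
    show "D > 0" using D by simp
    show "of_int D * qn s \<in> \<int>" by (rule D(2)) (simp add: R_def)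
    fix b assume b: "b \<in> \<O>"
    obtain k where k: "b = (\<Sum>x\<in>S. of_int (k x) *\<^sub>R x)" using S(3)[OF b] by blast
    have "of_int D * qre (qcnj s * b) = (\<Sum>x\<in>S. of_int (k x) * (of_int D * qre (qcnj s * x)))"
      by (simp add: k sum_distrib_left qre_sum algebra_simps)
    also have "\<dots> \<in> \<int>"
      by (rule Ints_sum, rule Ints_mult[OF Ints_of_int], rule D(2)) (simp add: R_def)
    finally show "of_int D * qre (qcnj s * b) \<in> \<int>" .
  qed
qed

end


lemma qnorm_nonneg: "qnorm x \<ge> 0" by (simp add: qnorm_def qn_nonneg)
lemma qnorm_sq: "(qnorm x)\<^sup>2 = qn x" by (simp add: qnorm_def qn_nonneg)
lemma qdot_vec: "qre (qcnj x * y) = quat_vec x \<bullet> quat_vec y"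
  by (simp add: quat_vec_def inner_vec_def sum_4 vector_def)
lemma qdot_bound: "\<bar>qre (qcnj x * y)\<bar> \<le> qnorm x * qnorm y"
  unfolding qdot_vec qnorm_eq by (rule Cauchy_Schwarz_ineq2)
lemma qn_add: "qn (x + y) = qn x + 2 * qre (qcnj x * y) + qn y"
  by (simp add: qn_def power2_eq_square algebra_simps)
lemma qn_diff: "qn (x - y) = qn x - 2 * qre (qcnj x * y) + qn y"
  by (simp add: qn_def power2_eq_square algebra_simps)
lemma qnorm_triangle: "qnorm (x + y) \<le> qnorm x + qnorm y"
  unfolding qnorm_eq quat_vec_add by (rule norm_triangle_ineq)
lemma qnorm_scaleR: "qnorm (r *\<^sub>R x) = \<bar>r\<bar> * qnorm x"
  unfolding qnorm_eq quat_vec_scaleR by simp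
lemma qnorm_le_sqrt: "qn x \<le> Y \<Longrightarrow> qnorm x \<le> sqrt Y"
  by (simp add: qnorm_def)

lemma cusp_bound:
  fixes A C Dl Dd r \<kappa> :: real and b s z :: quat
  assumes A1: "\<bar>A\<bar> \<ge> 1" and Dl0: "Dl \<noteq> 0"
    and disc: "qn b - A * C = Dl"
    and r0: "r > 0"
    and pt: "qn (z + (1 / A) *\<^sub>R b) + r\<^sup>2 = \<bar>Dl\<bar> / A\<^sup>2"
    and defn: "Dl < 0 \<Longrightarrow> z + (1 / A) *\<^sub>R b = 0"
    and cusp: "qnorm (z - s) \<le> \<kappa> * r\<^sup>2" and k0: "\<kappa> > 0"
    and Dd0: "Dd \<ge> 1"
    and den: "Dd * (A * qn s + 2 * qre (qcnj s * b) + C) \<in> \<int>"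
  shows "\<bar>A\<bar> \<le> Dd * (\<bar>Dl\<bar> * (\<kappa>\<^sup>2 * \<bar>Dl\<bar> + 2 * \<kappa> * sqrt \<bar>Dl\<bar> + 1)) + 3 * \<kappa> * sqrt \<bar>Dl\<bar>"
proof -
  define p where "p = z + (1 / A) *\<^sub>R b"
  define w where "w = z - s"
  define \<phi> where "\<phi> = A * qn s + 2 * qre (qcnj s * b) + C"
  define R2 where "R2 = \<bar>Dl\<bar> / A\<^sup>2"
  define R where "R = sqrt \<bar>Dl\<bar> / \<bar>A\<bar>"
  define d where "d = qre (qcnj p * w)"
  have A0: "A \<noteq> 0" using A1 by auto
  have RR: "R\<^sup>2 = R2" by (simp add: R_def R2_def power_divide)
  have R0: "R \<ge> 0" by (simp add: R_def)
  have R2nn: "0 \<le> R2" by (simp add: R2_def)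
  have R2le: "R2 \<le> \<bar>Dl\<bar>"
  proof -
    have "A\<^sup>2 \<ge> 1" using A1 by (metis abs_ge_self one_le_power order_trans power2_abs)
    then show ?thesis unfolding R2_def by (simp add: divide_le_eq mult_le_cancel_left1 order_trans[OF _ mult_left_mono])
  qed
  have Rle: "R \<le> sqrt \<bar>Dl\<bar>" unfolding R_def using A1
    by (simp add: divide_le_eq mult_le_cancel_left1 order_trans[OF _ mult_left_mono])
  have ptR: "qn p + r\<^sup>2 = R2" unfolding p_def R2_def by (rule pt)
  have pR: "qnorm p \<le> R"
  proof -
    have "qn p \<le> R2" using ptR zero_le_power2[of r] by linarith
    then have "qnorm p \<le> sqrt R2" by (rule qnorm_le_sqrt)
    then show ?thesis using real_sqrt_unique[OF RR R0] by simp
  qed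
  have rR: "r \<le> R"
  proof -
    have "r\<^sup>2 \<le> R\<^sup>2" using ptR RR qn_nonneg[of p] by linarith
    then show ?thesis by (rule power2_le_imp_le[OF _ R0])
  qed
  have sp: "s + (1 / A) *\<^sub>R b = p - w" unfolding p_def w_def by (simp add: algebra_simps)
  have phi_id: "\<phi> = A * qn (s + (1 / A) *\<^sub>R b) - Dl / A"
  proof -
    have "qn (s + (1 / A) *\<^sub>R b) = qn s + 2 * qre (qcnj s * ((1 / A) *\<^sub>R b)) + qn ((1 / A) *\<^sub>R b)"
      by (rule qn_add)
    also have "\<dots> = qn s + (2 / A) * qre (qcnj s * b) + qn b / A\<^sup>2"
      by (simp add: qn_scaleR power_divide)
    finally have e: "qn (s + (1 / A) *\<^sub>R b) = qn s + (2 / A) * qre (qcnj s * b) + qn b / A\<^sup>2" .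
    show ?thesis unfolding e \<phi>_def disc[symmetric] using A0
      by (simp add: field_simps power2_eq_square)
  qed
  have phi2: "\<phi> = A * (qn w - 2 * d - (if Dl > 0 then 1 else -1) * r\<^sup>2)"
  proof (cases "Dl > 0")
    case True
    have "\<phi> = A * (qn p - 2 * d + qn w) - Dl / A" unfolding phi_id sp qn_diff d_def ..
    also have "Dl / A = A * (qn p + r\<^sup>2)" using True ptR A0
      by (simp add: R2_def field_simps power2_eq_square)
    finally show ?thesis using True by (simp add: algebra_simps)
  next
    case False
    then have "Dl < 0" using Dl0 by simp
    then have p0: "p = 0" using defn by (simp add: p_def)
    have "\<phi> = A * qn w - Dl / A" unfolding phi_id sp p0 by simp
    also have "Dl / A = - A * r\<^sup>2" using \<open>Dl < 0\<close> ptR A0 p0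
      by (simp add: R2_def field_simps power2_eq_square)
    finally show ?thesis using False p0 by (simp add: d_def algebra_simps)
  qed
  have wb: "qnorm w \<le> \<kappa> * r\<^sup>2" using cusp by (simp add: w_def)
  have qnw: "qn w \<le> (\<kappa> * r\<^sup>2)\<^sup>2"
    using wb qnorm_nonneg[of w] by (metis power_mono qnorm_sq)
  have db: "\<bar>d\<bar> \<le> R * (\<kappa> * r\<^sup>2)"
  proof -
    have "\<bar>d\<bar> \<le> qnorm p * qnorm w" unfolding d_def by (rule qdot_bound)
    also have "\<dots> \<le> R * (\<kappa> * r\<^sup>2)" using pR wb qnorm_nonneg[of p] qnorm_nonneg[of w]
      by (intro mult_mono) auto
    finally show ?thesis .
  qed
  have r2R2: "r\<^sup>2 \<le> R2" using rR r0 RR by (metis less_imp_le power_mono)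
  define Y where "Y = \<kappa>\<^sup>2 * \<bar>Dl\<bar> + 2 * \<kappa> * sqrt \<bar>Dl\<bar> + 1"
  show ?thesis
  proof (cases "\<phi> = 0")
    case False
    have inner: "\<bar>qn w - 2 * d - (if Dl > 0 then 1 else -1) * r\<^sup>2\<bar> \<le> r\<^sup>2 * (\<kappa>\<^sup>2 * R2 + 2 * \<kappa> * R + 1)"
    proof -
      have "\<bar>qn w - 2 * d - (if Dl > 0 then 1 else -1) * r\<^sup>2\<bar> \<le> qn w + 2 * \<bar>d\<bar> + r\<^sup>2"
        using qn_nonneg[of w] zero_le_power2[of r] abs_ge_self[of d] abs_ge_minus_self[of d]
        by (cases "Dl > 0"; simp add: abs_le_iff; linarith)
      also have "\<dots> \<le> (\<kappa> * r\<^sup>2)\<^sup>2 + 2 * (R * (\<kappa> * r\<^sup>2)) + r\<^sup>2" using qnw db by linarith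
      also have "\<dots> = r\<^sup>2 * (\<kappa>\<^sup>2 * r\<^sup>2 + 2 * \<kappa> * R + 1)" by (simp add: power2_eq_square algebra_simps)
      also have "\<dots> \<le> r\<^sup>2 * (\<kappa>\<^sup>2 * R2 + 2 * \<kappa> * R + 1)"
        using r2R2 k0 by (intro mult_left_mono) auto
      finally show ?thesis .
    qed
    have "\<bar>\<phi>\<bar> \<le> \<bar>A\<bar> * (r\<^sup>2 * (\<kappa>\<^sup>2 * R2 + 2 * \<kappa> * R + 1))"
      unfolding phi2 abs_mult by (intro mult_left_mono inner) simp
    also have "\<dots> \<le> \<bar>A\<bar> * (R2 * Y)"
    proof (intro mult_left_mono)
      have "\<kappa>\<^sup>2 * R2 + 2 * \<kappa> * R + 1 \<le> Y" unfolding Y_def using R2le Rle k0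
        by (intro add_mono mult_left_mono) auto
      moreover have "0 \<le> \<kappa>\<^sup>2 * R2 + 2 * \<kappa> * R + 1" using R0 k0 R2nn by (simp add: add_nonneg_nonneg)
      ultimately show "r\<^sup>2 * (\<kappa>\<^sup>2 * R2 + 2 * \<kappa> * R + 1) \<le> R2 * Y"
        using r2R2 R2nn by (intro mult_mono) auto
    qed simp
    also have "\<dots> = \<bar>Dl\<bar> * Y / \<bar>A\<bar>" using A0 by (simp add: R2_def field_simps power2_eq_square)
    finally have phib: "\<bar>\<phi>\<bar> \<le> \<bar>Dl\<bar> * Y / \<bar>A\<bar>" .
    have "Dd * \<phi> \<noteq> 0" using False Dd0 by simp
    moreover have "Dd * \<phi> \<in> \<int>" using den by (simp add: \<phi>_def)
    ultimately have "\<bar>Dd * \<phi>\<bar> \<ge> 1"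
    proof -
      assume nz: "Dd * \<phi> \<noteq> 0" and inZ: "Dd * \<phi> \<in> \<int>"
      from inZ obtain k where k: "Dd * \<phi> = of_int k" by (rule Ints_cases)
      with nz have "k \<noteq> 0" by simp
      then have "1 \<le> \<bar>k\<bar>" by linarith
      then have "(1::real) \<le> of_int \<bar>k\<bar>" by simp
      then show ?thesis unfolding k by simp
    qed
    then have "1 \<le> Dd * \<bar>\<phi>\<bar>" using Dd0 by (simp add: abs_mult)
    also have "\<dots> \<le> Dd * (\<bar>Dl\<bar> * Y / \<bar>A\<bar>)" using phib Dd0 by (intro mult_left_mono) auto
    finally have "1 \<le> (Dd * (\<bar>Dl\<bar> * Y)) / \<bar>A\<bar>" by simp
    then have "\<bar>A\<bar> \<le> Dd * (\<bar>Dl\<bar> * Y)" using A0 by (simp add: pos_le_divide_eq)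
    moreover have "0 \<le> 3 * \<kappa> * sqrt \<bar>Dl\<bar>" using k0 by simp
    ultimately show ?thesis unfolding Y_def by linarith
  next
    case True
    have Dpos: "Dl > 0"
    proof (rule ccontr)
      assume "\<not> Dl > 0"
      then have "Dl < 0" using Dl0 by simp
      then have "p = 0" using defn by (simp add: p_def)
      then have "d = 0" by (simp add: d_def quat_eq_iff)
      then have "\<phi> = A * (qn w + r\<^sup>2)" using phi2 \<open>Dl < 0\<close> by simp
      moreover have "qn w + r\<^sup>2 > 0" using r0 qn_nonneg[of w] by (smt (verit) zero_less_power2)
      ultimately show False using True A0 by simp
    qed
    then have "r\<^sup>2 = qn w - 2 * d" using phi2 True A0 by simp
    also have "\<dots> \<le> (\<kappa> * r\<^sup>2)\<^sup>2 + 2 * (R * (\<kappa> * r\<^sup>2))" using qnw db by linarith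
    also have "\<dots> = r\<^sup>2 * (\<kappa>\<^sup>2 * r\<^sup>2 + 2 * \<kappa> * R)" by (simp add: power2_eq_square algebra_simps)
    finally have "r\<^sup>2 * 1 \<le> r\<^sup>2 * (\<kappa>\<^sup>2 * r\<^sup>2 + 2 * \<kappa> * R)" by simp
    then have "1 \<le> \<kappa>\<^sup>2 * r\<^sup>2 + 2 * \<kappa> * R" using r0 by (simp add: mult_le_cancel_left)
    also have "\<dots> \<le> (\<kappa> * R)\<^sup>2 + 2 * (\<kappa> * R)"
      using r2R2 RR k0 by (simp add: power_mult_distrib mult_left_mono)
    finally have kR: "1 \<le> (\<kappa> * R)\<^sup>2 + 2 * (\<kappa> * R)" .
    have "\<kappa> * R \<ge> 1/3"
    proof (rule ccontr)
      assume "\<not> ?thesis"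
      then have "\<kappa> * R < 1/3" by simp
      moreover have "\<kappa> * R \<ge> 0" using k0 R0 by simp
      ultimately have "(\<kappa> * R)\<^sup>2 \<le> (1/3)\<^sup>2" by (intro power_mono) auto
      then have "(\<kappa> * R)\<^sup>2 \<le> 1/9" by (simp add: power2_eq_square)
      then show False using kR \<open>\<kappa> * R < 1/3\<close> by linarith
    qed
    then have "\<kappa> * sqrt \<bar>Dl\<bar> / \<bar>A\<bar> \<ge> 1/3" by (simp add: R_def)
    then have "\<bar>A\<bar> \<le> 3 * \<kappa> * sqrt \<bar>Dl\<bar>" using A0 by (simp add: field_simps)
    moreover have "0 \<le> Dd * (\<bar>Dl\<bar> * Y)" using Dd0 k0 by (simp add: Y_def)
    ultimately show ?thesis unfolding Y_def by linarith
  qed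
qed


lemma point_from_reduced:
  fixes a c \<Delta> :: int and b :: quat
  assumes disc: "qn b - real_of_int a * real_of_int c = real_of_int \<Delta>"
    and red: "reduced_form F (a, b, c)" and a0: "a \<noteq> 0"
  shows "\<exists>z r. (z, r) \<in> F \<and> r > 0 \<and>
     qn (z + (1 / real_of_int a) *\<^sub>R b) + r\<^sup>2 = \<bar>real_of_int \<Delta>\<bar> / (real_of_int a)\<^sup>2 \<and>
     (\<Delta> < 0 \<longrightarrow> z + (1 / real_of_int a) *\<^sub>R b = 0)"
proof -
  define A where "A = real_of_int a"
  define C where "C = real_of_int c"
  define D where "D = real_of_int \<Delta>"
  have A0: "A \<noteq> 0" using a0 by (simp add: A_def)
  have fd: "form_disc (A, b, C) = D" using disc by (simp add: form_disc_def A_def C_def D_def)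
  have fd': "form_disc (- A, - b, - C) = D" using disc by (simp add: form_disc_def A_def C_def D_def)
  from red have "(a > 0 \<and> D < 0 \<and> pos_def_reduced F (A, b, C)) \<or>
     (a < 0 \<and> D < 0 \<and> pos_def_reduced F (- A, - b, - C)) \<or>
     (D > 0 \<and> form_C (A, b, C) \<inter> F \<noteq> {})"
    unfolding reduced_form_def Let_def using fd by (simp add: A_def C_def)
  then show ?thesis
  proof (elim disjE conjE)
    assume ap: "a > 0" and Dn: "D < 0" and pd: "pos_def_reduced F (A, b, C)"
    define z where "z = (- 1 / A) *\<^sub>R b"
    define r where "r = sqrt (- D) / A"
    have A_pos: "A > 0" using ap by (simp add: A_def)
    have F: "(z, r) \<in> F" using pd fd by (simp add: pos_def_reduced_def z_def r_def)
    have r0: "r > 0" using A_pos Dn by (simp add: r_def)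
    have p0: "z + (1 / A) *\<^sub>R b = 0" by (simp add: z_def scaleR_left_distrib[symmetric])
    have "r\<^sup>2 = \<bar>D\<bar> / A\<^sup>2" using Dn by (simp add: r_def power_divide)
    then show ?thesis using F r0 p0 by (intro exI[of _ z] exI[of _ r]) (simp add: A_def D_def)
  next
    assume an: "a < 0" and Dn: "D < 0" and pd: "pos_def_reduced F (- A, - b, - C)"
    define z where "z = (- 1 / - A) *\<^sub>R - b"
    define r where "r = sqrt (- D) / - A"
    have A_neg: "A < 0" using an by (simp add: A_def)
    have F: "(z, r) \<in> F" using pd fd' by (simp add: pos_def_reduced_def z_def r_def)
    have r0: "r > 0" using A_neg Dn by (simp add: r_def divide_pos_neg)
    have p0: "z + (1 / A) *\<^sub>R b = 0" by (simp add: z_def)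
    have "r\<^sup>2 = \<bar>D\<bar> / A\<^sup>2" using Dn by (simp add: r_def power_divide)
    then show ?thesis using F r0 p0 by (intro exI[of _ z] exI[of _ r]) (simp add: A_def D_def)
  next
    assume Dp: "D > 0" and ne: "form_C (A, b, C) \<inter> F \<noteq> {}"
    then obtain z r where F: "(z, r) \<in> F" and r0: "r > 0"
      and eq: "form_eval (A, b, C) z 1 + A * r\<^sup>2 = 0"
      by (auto simp: form_C_def)
    have eq2: "A * qn z + 2 * qre (qcnj z * b) + C + A * r\<^sup>2 = 0"
      using eq by (simp add: form_eval_def qtr_def)
    have "qn (z + (1 / A) *\<^sub>R b) = qn z + 2 * qre (qcnj z * ((1 / A) *\<^sub>R b)) + qn ((1 / A) *\<^sub>R b)"
      by (rule qn_add)
    also have "\<dots> = qn z + (2 / A) * qre (qcnj z * b) + qn b / A\<^sup>2"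
      by (simp add: qn_scaleR power_divide)
    finally have e: "qn (z + (1 / A) *\<^sub>R b) = qn z + (2 / A) * qre (qcnj z * b) + qn b / A\<^sup>2" .
    have "qn (z + (1 / A) *\<^sub>R b) + r\<^sup>2 = D / A\<^sup>2"
    proof -
      have "A * (qn (z + (1 / A) *\<^sub>R b) + r\<^sup>2) = (A * qn z + 2 * qre (qcnj z * b) + A * r\<^sup>2) + qn b / A"
        unfolding e using A0 by (simp add: field_simps power2_eq_square)
      also have "\<dots> = qn b / A - C" using eq2 by linarith
      also have "\<dots> = A * (D / A\<^sup>2)" using A0 fd by (simp add: form_disc_def field_simps power2_eq_square)
      finally show ?thesis by (simp only: mult_left_cancel[OF A0])
    qed
    then show ?thesis using F r0 Dp by (intro exI[of _ z] exI[of _ r]) (simp add: A_def D_def)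
  qed
qed


theorem theorem18:
  fixes A \<O> :: "quat set" and F :: "(quat \<times> real) set" and \<Delta> :: int
  assumes "definite_quat_algebra_Q A"
    and "quat_order A \<O>"
    and "weak_fundamental_domain (SL2 \<O>) F"
    and "\<Delta> \<noteq> 0"
  shows "finite {f \<in> Qforms \<O> \<Delta>. reduced_form F f}"
proof -
  note ord = assms(2)
  have h1: "1 \<in> A" and h2: "\<forall>x\<in>A. \<forall>y\<in>A. x + y \<in> A \<and> x * y \<in> A"
    and h3: "\<exists>e :: nat \<Rightarrow> quat. (\<forall>i<4. e i \<in> A) \<and> real_lin_indep4 e \<and>
        A = {(\<Sum>i<4. of_rat (c i) *\<^sub>R e i) | c :: nat \<Rightarrow> rat. True}"
    using assms(1) unfolding definite_quat_algebra_Q_def by (blast, blast, argo)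
  from h3 obtain e where e1: "\<forall>i<4. e i \<in> A" and e2: "real_lin_indep4 e"
    and e3: "A = {(\<Sum>i<4. of_rat (c i) *\<^sub>R e i) | c :: nat \<Rightarrow> rat. True}"
    by (elim exE conjE)
  have qa: "qalg A e"
  proof (unfold_locales)
    show "1 \<in> A" by (rule h1)
    show "\<And>x y. x \<in> A \<Longrightarrow> y \<in> A \<Longrightarrow> x + y \<in> A" using h2 by blast
    show "\<And>x y. x \<in> A \<Longrightarrow> y \<in> A \<Longrightarrow> x * y \<in> A" using h2 by blast
    show "\<And>i. i < 4 \<Longrightarrow> e i \<in> A" using e1 by blast
    show "real_lin_indep4 e" by (rule e2)
    show "A = {(\<Sum>i<4. of_rat (c i) *\<^sub>R e i) | c :: nat \<Rightarrow> rat. True}" by (rule e3)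
  qed
  interpret qalg A e by (rule qa)
  have OA: "\<O> \<subseteq> A" by (rule order_sub_A[OF ord])
  obtain N where N: "N > 0" "\<O> \<subseteq> Lat N" using order_Lat[OF ord] by blast
  have w1: "\<exists>K. qcompact K \<and> F \<subseteq> K \<times> {0<..}"
    and w2: "\<exists>\<kappa> \<epsilon> Z E. \<kappa> > 0 \<and> \<epsilon> > 0 \<and> finite Z \<and>
        (\<forall>s\<in>Z. parabolic_fixed_point (SL2 \<O>) (Some s)) \<and>
        F = {(z, r) \<in> F. r \<ge> \<epsilon>} \<union> (\<Union>s\<in>Z. E s) \<and>
        (\<forall>s\<in>Z. E s \<subseteq> {(z, r) \<in> F. qnorm (z - s) \<le> \<kappa> * r\<^sup>2})"
    using assms(3) unfolding weak_fundamental_domain_def by (argo, argo)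
  from w1 obtain K where K: "qcompact K" "F \<subseteq> K \<times> {0<..}" by (elim exE conjE)
  from w2 obtain \<kappa> \<epsilon> Z E where k0: "\<kappa> > 0" and e0: "\<epsilon> > 0" and Zfin: "finite Z"
    and Zp: "\<forall>s\<in>Z. parabolic_fixed_point (SL2 \<O>) (Some s)"
    and Fdec: "F = {(z, r) \<in> F. r \<ge> \<epsilon>} \<union> (\<Union>s\<in>Z. E s)"
    and Es: "\<forall>s\<in>Z. E s \<subseteq> {(z, r) \<in> F. qnorm (z - s) \<le> \<kappa> * r\<^sup>2}"
    by (elim exE conjE)
  obtain Kb where Kb: "Kb \<ge> 0" "\<And>z. z \<in> K \<Longrightarrow> qnorm z \<le> Kb"
  proof -
    have "bounded (quat_vec ` K)" using K(1) unfolding qcompact_def by (rule compact_imp_bounded)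
    then obtain B where B: "\<And>x. x \<in> quat_vec ` K \<Longrightarrow> norm x \<le> B" by (auto simp: bounded_iff)
    show ?thesis
    proof (rule that[of "max B 0"])
      fix z assume "z \<in> K"
      then have "norm (quat_vec z) \<le> B" using B by blast
      then show "qnorm z \<le> max B 0" by (simp add: qnorm_eq)
    qed simp
  qed
  have ZA: "\<And>s. s \<in> Z \<Longrightarrow> s \<in> A"
    using Zp parabolic_fixed_in_A[OF OA] by blast
  have "\<forall>s\<in>Z. \<exists>D::int. D > 0 \<and> of_int D * qn s \<in> \<int> \<and> (\<forall>b\<in>\<O>. of_int D * qre (qcnj s * b) \<in> \<int>)"
    using order_denom[OF ord] ZA by blast
  then obtain Dd where Dd: "\<And>s. s \<in> Z \<Longrightarrow> Dd s > 0 \<and> of_int (Dd s) * qn s \<in> \<int> \<and>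
      (\<forall>b\<in>\<O>. of_int (Dd s) * qre (qcnj s * b) \<in> \<int>)"
    by (rule bchoice[THEN exE]) blast
  define \<delta> where "\<delta> = \<bar>real_of_int \<Delta>\<bar>"
  define Y where "Y = \<delta> * (\<kappa>\<^sup>2 * \<delta> + 2 * \<kappa> * sqrt \<delta> + 1)"
  define Am where "Am = sqrt \<delta> / \<epsilon> + (\<Sum>s\<in>Z. real_of_int (Dd s) * Y) + 3 * \<kappa> * sqrt \<delta>"
  define Bm where "Bm = (sqrt \<delta> + Am * Kb)\<^sup>2"
  define Cm where "Cm = Bm + \<delta> + 2 * Kb * sqrt \<delta>"
  have d0: "\<delta> \<ge> 0" by (simp add: \<delta>_def)
  have Y0: "Y \<ge> 0" using d0 k0 by (simp add: Y_def)
  have Ddnn: "\<And>s. s \<in> Z \<Longrightarrow> 0 \<le> real_of_int (Dd s) * Y"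
  proof -
    fix s assume "s \<in> Z"
    then have "Dd s > 0" using Dd by blast
    then show "0 \<le> real_of_int (Dd s) * Y" using Y0 by simp
  qed
  have sum0: "\<And>s. s \<in> Z \<Longrightarrow> real_of_int (Dd s) * Y \<le> (\<Sum>s\<in>Z. real_of_int (Dd s) * Y)"
    using Zfin Ddnn by (intro member_le_sum) auto
  have sumnn: "0 \<le> (\<Sum>s\<in>Z. real_of_int (Dd s) * Y)"
    using Ddnn by (intro sum_nonneg) auto
  have Am0: "Am \<ge> 0" using sumnn d0 k0 e0 by (simp add: Am_def)
  have bound: "\<bar>real_of_int a\<bar> \<le> Am \<and> qn b \<le> Bm \<and> \<bar>real_of_int c\<bar> \<le> Cm"
    if f: "(a, b, c) \<in> Qforms \<O> \<Delta>" "reduced_form F (a, b, c)" for a b c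
  proof -
    have bO: "b \<in> \<O>" and disc: "qn b - real_of_int a * real_of_int c = real_of_int \<Delta>"
      using f(1) by (auto simp: Qforms_def form_disc_def)
    show ?thesis
    proof (cases "a = 0")
      case True
      then have qb: "qn b = real_of_int \<Delta>" using disc by simp
      then have Dp: "real_of_int \<Delta> > 0" using assms(4) qn_nonneg[of b] by linarith
      then have "\<not> (0 < real_of_int \<Delta> \<and> False)" by simp
      from f(2) True have "form_C (0, b, real_of_int c) \<inter> F \<noteq> {}"
        using disc by (auto simp: reduced_form_def Let_def form_disc_def)
      then obtain z r where zF: "(z, r) \<in> F" and eq: "form_eval (0, b, real_of_int c) z 1 = 0"
        by (auto simp: form_C_def)
      have zK: "z \<in> K" using zF K(2) by auto
      have ceq: "real_of_int c = - (2 * qre (qcnj z * b))" using eq by (simp add: form_eval_def qtr_def)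
      have "\<bar>real_of_int c\<bar> \<le> 2 * (qnorm z * qnorm b)" unfolding ceq using qdot_bound[of z b] by simp
      also have "\<dots> \<le> 2 * (Kb * sqrt \<delta>)"
        using Kb(2)[OF zK] qnorm_nonneg[of z] qnorm_nonneg[of b] Kb(1) qb
        by (intro mult_left_mono mult_mono) (auto simp: qnorm_def \<delta>_def)
      finally have cb: "\<bar>real_of_int c\<bar> \<le> 2 * Kb * sqrt \<delta>" by simp
      have "qn b \<le> Bm"
      proof -
        have "qn b = (sqrt \<delta>)\<^sup>2" using qb Dp by (simp add: \<delta>_def)
        also have "\<dots> \<le> Bm" unfolding Bm_def using Am0 Kb(1) d0 by (intro power_mono) auto
        finally show ?thesis .
      qed
      moreover have "Bm \<ge> 0" by (simp add: Bm_def)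
      ultimately show ?thesis using True Am0 cb d0 by (simp add: Cm_def)
    next
      case False
      define a' where "a' = real_of_int a"
      have a1: "\<bar>a'\<bar> \<ge> 1" using False by (simp add: a'_def)
      obtain z r where zF: "(z, r) \<in> F" and r0: "r > 0"
        and pt: "qn (z + (1 / a') *\<^sub>R b) + r\<^sup>2 = \<delta> / a'\<^sup>2"
        and dn: "\<Delta> < 0 \<longrightarrow> z + (1 / a') *\<^sub>R b = 0"
        using point_from_reduced[OF disc f(2) False] by (auto simp: a'_def \<delta>_def)
      have zK: "z \<in> K" using zF K(2) by auto
      have ab: "\<bar>a'\<bar> \<le> Am"
      proof -
        have "(z, r) \<in> {(z, r) \<in> F. r \<ge> \<epsilon>} \<or> (\<exists>s\<in>Z. (z, r) \<in> E s)"
          using zF Fdec by blast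
        then show ?thesis
        proof
          assume "(z, r) \<in> {(z, r) \<in> F. r \<ge> \<epsilon>}"
          then have re: "r \<ge> \<epsilon>" by simp
          have "r\<^sup>2 \<le> \<delta> / a'\<^sup>2" using pt qn_nonneg[of "z + (1 / a') *\<^sub>R b"] by linarith
          moreover have "\<epsilon>\<^sup>2 \<le> r\<^sup>2" using re e0 by (intro power_mono) auto
          ultimately have "\<epsilon>\<^sup>2 \<le> \<delta> / a'\<^sup>2" by linarith
          then have "\<epsilon>\<^sup>2 * a'\<^sup>2 \<le> \<delta>" using a1 by (simp add: le_divide_eq)
          then have "(\<epsilon> * \<bar>a'\<bar>)\<^sup>2 \<le> (sqrt \<delta>)\<^sup>2" using d0 by (simp add: power_mult_distrib)
          then have "\<epsilon> * \<bar>a'\<bar> \<le> sqrt \<delta>" by (rule power2_le_imp_le) (simp add: d0)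
          then have "\<bar>a'\<bar> \<le> sqrt \<delta> / \<epsilon>" using e0 by (simp add: le_divide_eq mult.commute)
          moreover have "0 \<le> 3 * \<kappa> * sqrt \<delta>" using k0 d0 by simp
          ultimately show ?thesis unfolding Am_def using sumnn by linarith
        next
          assume "\<exists>s\<in>Z. (z, r) \<in> E s"
          then obtain s where sZ: "s \<in> Z" and zE: "(z, r) \<in> E s" by blast
          have cusp: "qnorm (z - s) \<le> \<kappa> * r\<^sup>2" using Es sZ zE by blast
          have Dds: "Dd s > 0" "of_int (Dd s) * qn s \<in> \<int>" "of_int (Dd s) * qre (qcnj s * b) \<in> \<int>"
            using Dd[OF sZ] bO by auto
          have den: "real_of_int (Dd s) * (a' * qn s + 2 * qre (qcnj s * b) + real_of_int c) \<in> \<int>"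
          proof -
            have "real_of_int (Dd s) * (a' * qn s + 2 * qre (qcnj s * b) + real_of_int c)
              = a' * (of_int (Dd s) * qn s) + 2 * (of_int (Dd s) * qre (qcnj s * b)) + of_int (Dd s * c)"
              by (simp add: algebra_simps)
            also have "\<dots> \<in> \<int>"
            proof -
              have i1: "a' * (of_int (Dd s) * qn s) \<in> \<int>" by (rule Ints_mult[OF _ Dds(2)]) (simp add: a'_def)
              have i2: "2 * (of_int (Dd s) * qre (qcnj s * b)) \<in> \<int>" by (rule Ints_mult[OF _ Dds(3)]) simp
              have i3: "(of_int (Dd s * c) :: real) \<in> \<int>" by (rule Ints_of_int)
              show ?thesis by (rule Ints_add[OF Ints_add[OF i1 i2] i3])
            qed
            finally show ?thesis .
          qed
          have "\<bar>a'\<bar> \<le> real_of_int (Dd s) * (\<bar>real_of_int \<Delta>\<bar> * (\<kappa>\<^sup>2 * \<bar>real_of_int \<Delta>\<bar> +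
               2 * \<kappa> * sqrt \<bar>real_of_int \<Delta>\<bar> + 1)) + 3 * \<kappa> * sqrt \<bar>real_of_int \<Delta>\<bar>"
          proof (rule cusp_bound[where b = b and s = s and z = z and r = r and C = "real_of_int c"])
            show "\<bar>a'\<bar> \<ge> 1" by (rule a1)
            show "real_of_int \<Delta> \<noteq> 0" using assms(4) by simp
            show "qn b - a' * real_of_int c = real_of_int \<Delta>" using disc by (simp add: a'_def)
            show "r > 0" by (rule r0)
            show "qn (z + (1 / a') *\<^sub>R b) + r\<^sup>2 = \<bar>real_of_int \<Delta>\<bar> / a'\<^sup>2" using pt by (simp add: \<delta>_def)
            show "real_of_int \<Delta> < 0 \<Longrightarrow> z + (1 / a') *\<^sub>R b = 0" using dn by simp
            show "qnorm (z - s) \<le> \<kappa> * r\<^sup>2" by (rule cusp)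
            show "\<kappa> > 0" by (rule k0)
            show "real_of_int (Dd s) \<ge> 1" using Dds(1) by simp
            show "real_of_int (Dd s) * (a' * qn s + 2 * qre (qcnj s * b) + real_of_int c) \<in> \<int>" by (rule den)
          qed
          also have "\<dots> = real_of_int (Dd s) * Y + 3 * \<kappa> * sqrt \<delta>" by (simp add: Y_def \<delta>_def)
          also have "\<dots> \<le> Am"
          proof -
            have "0 \<le> sqrt \<delta> / \<epsilon>" using d0 e0 by simp
            then show ?thesis unfolding Am_def using sum0[OF sZ] by linarith
          qed
          finally show ?thesis .
        qed
      qed
      have bb: "qn b \<le> Bm"
      proof -
        have "b = a' *\<^sub>R ((z + (1 / a') *\<^sub>R b) - z)" using a1 by (auto simp: algebra_simps)
        then have "qnorm b = \<bar>a'\<bar> * qnorm ((z + (1 / a') *\<^sub>R b) - z)" by (metis qnorm_scaleR)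
        also have "\<dots> \<le> \<bar>a'\<bar> * (qnorm (z + (1 / a') *\<^sub>R b) + qnorm z)"
          using qnorm_triangle[of "z + (1 / a') *\<^sub>R b" "- z"] by (intro mult_left_mono) (auto simp: qnorm_def)
        also have "\<dots> \<le> \<bar>a'\<bar> * (sqrt \<delta> / \<bar>a'\<bar> + Kb)"
        proof (intro mult_left_mono add_mono)
          have "qn (z + (1 / a') *\<^sub>R b) \<le> \<delta> / a'\<^sup>2" using pt zero_le_power2[of r] by linarith
          then have "qnorm (z + (1 / a') *\<^sub>R b) \<le> sqrt (\<delta> / a'\<^sup>2)" by (rule qnorm_le_sqrt)
          then show "qnorm (z + (1 / a') *\<^sub>R b) \<le> sqrt \<delta> / \<bar>a'\<bar>" by (simp add: real_sqrt_divide)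
          show "qnorm z \<le> Kb" using Kb(2)[OF zK] .
        qed simp
        also have "\<dots> = sqrt \<delta> + \<bar>a'\<bar> * Kb" using a1 by (simp add: field_simps)
        also have "\<dots> \<le> sqrt \<delta> + Am * Kb" using ab Kb(1) by (simp add: mult_right_mono)
        finally have "qnorm b \<le> sqrt \<delta> + Am * Kb" .
        then have "(qnorm b)\<^sup>2 \<le> (sqrt \<delta> + Am * Kb)\<^sup>2" using qnorm_nonneg[of b] by (intro power_mono) auto
        then show ?thesis by (simp add: qnorm_sq Bm_def)
      qed
      have cb: "\<bar>real_of_int c\<bar> \<le> Cm"
      proof -
        have "\<bar>real_of_int c\<bar> \<le> \<bar>a'\<bar> * \<bar>real_of_int c\<bar>" using a1 by (simp add: mult_le_cancel_right1)
        also have "\<dots> = \<bar>qn b - real_of_int \<Delta>\<bar>" using disc by (simp add: a'_def abs_mult[symmetric])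
        also have "\<dots> \<le> qn b + \<delta>" using qn_nonneg[of b] by (simp add: \<delta>_def)
        also have "\<dots> \<le> Cm"
        proof -
          have "0 \<le> 2 * Kb * sqrt \<delta>" using Kb(1) d0 by simp
          then show ?thesis unfolding Cm_def using bb by linarith
        qed
        finally show ?thesis .
      qed
      show ?thesis using ab bb cb by (simp add: a'_def)
    qed
  qed
  define Ai where "Ai = \<lceil>Am\<rceil>"
  define Ci where "Ci = \<lceil>Cm\<rceil>"
  have "{f \<in> Qforms \<O> \<Delta>. reduced_form F f} \<subseteq> {-Ai..Ai} \<times> {x \<in> Lat N. qn x \<le> Bm} \<times> {-Ci..Ci}"
  proof
    fix f assume fm: "f \<in> {f \<in> Qforms \<O> \<Delta>. reduced_form F f}"
    obtain a b c where fe: "f = (a, b, c)" by (cases f) auto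
    have fq: "(a, b, c) \<in> Qforms \<O> \<Delta>" "reduced_form F (a, b, c)" using fm fe by auto
    have bO: "b \<in> \<O>" using fq(1) by (simp add: Qforms_def)
    from bound[OF fq] have B: "\<bar>real_of_int a\<bar> \<le> Am" "qn b \<le> Bm" "\<bar>real_of_int c\<bar> \<le> Cm" by auto
    have "\<bar>a\<bar> \<le> Ai" using B(1) unfolding Ai_def by linarith
    moreover have "\<bar>c\<bar> \<le> Ci" using B(3) unfolding Ci_def by linarith
    moreover have "b \<in> Lat N" using bO N(2) by blast
    ultimately show "f \<in> {-Ai..Ai} \<times> {x \<in> Lat N. qn x \<le> Bm} \<times> {-Ci..Ci}"
      using B(2) by (auto simp: fe abs_le_iff)
  qed
  moreover have "finite ({-Ai..Ai} \<times> {x \<in> Lat N. qn x \<le> Bm} \<times> {-Ci..Ci})"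
    using Lat_finite[OF N(1)] by simp
  ultimately show ?thesis by (rule finite_subset)
qed


end
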